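(* Consider $\min f(x)$ s.t. $g(x)\in K$ with $f,g$ twice continuously differentiable, $K\subseteq\mathbb{R}^m$ closed, $C:=g^{-1}(K)$. Let $d\in T_C(\bar x)$, let $\bar x$ be a local optimal solution in direction $d$, suppose $\nabla f(\bar x)d=0$ and MSCQ holds at $\bar x$ in direction $d$ for $g(x)\in K$. Then: (a) there exists $\lambda\in\Lambda(\bar x;d)$ with $\sigma_\Theta(\lambda)\le0$ and $\lambda\in N_{T_K^{''}(g(\bar x);\nabla g(\bar x)d)}(0)$; (b) if $T_K^2(g(\bar x);\nabla g(\bar x)d)\neq\emptyset$, there exists $\lambda\in\Lambda(\bar x;d)$ with $\nabla^2_{xx}L(\bar x,\lambda)(d,d)-\sigma_\Omega(\lambda)\ge0$, and moreover there exist sequences $w_k\in T_C^2(\bar x;d)$ and $\lambda_k\in N_{T_K^2(g(\bar x);\nabla g(\bar x)d)}\big(\nabla g(\bar x)w_k+\nabla^2g(\bar x)(d,d)\big)$ such that $\nabla f(\bar x)w_k+\nabla^2f(\bar x)(d,d)\to\alpha$, $\langle\nabla g(\bar x)^T\lambda_k+\nabla f(\bar x),w_k\rangle\to0$, and $\lambda_k\to\lambda$, where $\alpha:=\inf_{w\in T_C^2(\bar x;d)}(\nabla f(\bar x)w+\nabla^2f(\bar x)(d,d))$.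
   Context: $L(x,\lambda):=f(x)+\langle\lambda,g(x)\rangle$. The M-multiplier set in direction $d$ is $\Lambda(\bar x;d):=\{\lambda\in\mathbb{R}^m\mid \lambda\in N_K(g(\bar x);\nabla g(\bar x)d),\ \nabla_xL(\bar x,\lambda)=0\}$, where $N_K(\bar y;v):=\limsup_{t\downarrow0,v'\to v}\hat N_K(\bar y+tv')$ is the directional limiting normal cone; $N_A(\cdot)$ is the limiting normal cone. $\Theta:=\nabla g(\bar x)(T_C^{''}(\bar x;d))$, $\Omega:=\nabla g(\bar x)(T_C^2(\bar x;d))+\nabla^2g(\bar x)(d,d)$, $\nabla^2g(\bar x)(d,d):=(d^T\nabla^2g_i(\bar x)d)_i$. $T_S^2(\bar y;v):=\{w\mid \exists t_k\downarrow 0,\ w_k\to w,\ \bar y+t_kv+\tfrac12 t_k^2w_k\in S\}$; $T_S^{''}(\bar y;v):=\{w\mid \exists (t_k,r_k)\downarrow(0,0),\ w_k\to w,\ t_k/r_k\to0,\ \bar y+t_kv+\tfrac12 t_kr_kw_k\in S\}$. $\sigma_S(\lambda):=\sup_{u\in S}\langle\lambda,u\rangle$. $V_{\rho,\delta}(d):=\{w\in\delta B\mid \|\,\|d\|w-\|w\|d\,\|\le\rho\|w\|\|d\|\}$; local optimality in direction $d$: $f(x)\ge f(\bar x)$ on $C\cap(\bar x+V_{\rho,\delta}(d))$ for some $\rho,\delta>0$. MSCQ at $\bar x$ in direction $d$: $\mathrm{dist}(x,g^{-1}(K))\le\kappa\,\mathrm{dist}(g(x),K)$ for all $x\in\bar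 x+V_{\rho,\delta}(d)$, for some $\rho,\delta,\kappa>0$. *)

theory Defs
  imports "HOL-Analysis.Analysis"
begin

definition tangent_cone :: "'a::real_normed_vector set \<Rightarrow> 'a \<Rightarrow> 'a set" where
  "tangent_cone S x = {d. \<exists>t dd. (\<forall>k. t k > 0) \<and> t \<longlonglongrightarrow> 0 \<and> dd \<longlonglongrightarrow> d
      \<and> (\<forall>k. x + t k *\<^sub>R dd k \<in> S)}"

definition second_order_tangent_set :: "'a::real_normed_vector set \<Rightarrow> 'a \<Rightarrow> 'a \<Rightarrow> 'a set" where
  "second_order_tangent_set S y v = {w. \<exists>t ww. (\<forall>k. t k > 0) \<and> t \<longlonglongrightarrow> 0 \<and> ww \<longlonglongrightarrow> w
      \<and> (\<forall>k. y + t k *\<^sub>R v + ((1/2) * (t k)\<^sup>2) *\<^sub>R ww k \<in> S)}"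

definition asymptotic_second_order_tangent_cone :: "'a::real_normed_vector set \<Rightarrow> 'a \<Rightarrow> 'a \<Rightarrow> 'a set" where
  "asymptotic_second_order_tangent_cone S y v = {w. \<exists>t r ww. (\<forall>k. t k > 0 \<and> r k > 0)
      \<and> t \<longlonglongrightarrow> 0 \<and> r \<longlonglongrightarrow> 0 \<and> (\<lambda>k. t k / r k) \<longlonglongrightarrow> 0 \<and> ww \<longlonglongrightarrow> w
      \<and> (\<forall>k. y + t k *\<^sub>R v + ((1/2) * t k * r k) *\<^sub>R ww k \<in> S)}"

definition regular_normal_cone :: "'a::real_inner set \<Rightarrow> 'a \<Rightarrow> 'a set" where
  "regular_normal_cone A y = {l. y \<in> A \<and> (\<forall>\<epsilon>>0. \<exists>\<delta>>0. \<forall>y'\<in>A. norm (y' - y) < \<delta> \<longrightarrow>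
      l \<bullet> (y' - y) \<le> \<epsilon> * norm (y' - y))}"

definition limiting_normal_cone :: "'a::real_inner set \<Rightarrow> 'a \<Rightarrow> 'a set" where
  "limiting_normal_cone A y = {l. \<exists>ys ls. ys \<longlonglongrightarrow> y \<and> ls \<longlonglongrightarrow> l
      \<and> (\<forall>k. ys k \<in> A \<and> ls k \<in> regular_normal_cone A (ys k))}"

definition directional_normal_cone :: "'a::real_inner set \<Rightarrow> 'a \<Rightarrow> 'a \<Rightarrow> 'a set" where
  "directional_normal_cone A y v = {l. \<exists>t vs ls. (\<forall>k. t k > 0) \<and> t \<longlonglongrightarrow> 0 \<and> vs \<longlonglongrightarrow> v
      \<and> ls \<longlonglongrightarrow> l \<and> (\<forall>k. ls k \<in> regular_normal_cone A (y + t k *\<^sub>R vs k))}"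

definition support_fun :: "'a::real_inner set \<Rightarrow> 'a \<Rightarrow> ereal" where
  "support_fun S l = (SUP u\<in>S. ereal (l \<bullet> u))"

definition dir_nbhd :: "real \<Rightarrow> real \<Rightarrow> 'a::real_normed_vector \<Rightarrow> 'a set" where
  "dir_nbhd \<rho> \<delta> d = {w \<in> cball 0 \<delta>. norm (norm d *\<^sub>R w - norm w *\<^sub>R d) \<le> \<rho> * norm w * norm d}"

definition local_opt_dir :: "('a::real_normed_vector \<Rightarrow> real) \<Rightarrow> 'a set \<Rightarrow> 'a \<Rightarrow> 'a \<Rightarrow> bool" where
  "local_opt_dir f C xbar d \<longleftrightarrow> xbar \<in> C \<and> (\<exists>\<rho>>0. \<exists>\<delta>>0. \<forall>w\<in>dir_nbhd \<rho> \<delta> d.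
      xbar + w \<in> C \<longrightarrow> f xbar \<le> f (xbar + w))"

definition MSCQ_dir :: "('a::real_normed_vector \<Rightarrow> 'b::real_normed_vector) \<Rightarrow> 'b set \<Rightarrow> 'a \<Rightarrow> 'a \<Rightarrow> bool" where
  "MSCQ_dir g K xbar d \<longleftrightarrow> (\<exists>\<rho>>0. \<exists>\<delta>>0. \<exists>\<kappa>>0. \<forall>w\<in>dir_nbhd \<rho> \<delta> d.
      infdist (xbar + w) (g -` K) \<le> \<kappa> * infdist (g (xbar + w)) K)"

text \<open>M-multiplier set Lambda(xbar;d), given Df = nabla f(xbar), Dg = nabla g(xbar), y = g(xbar).\<close>
definition M_multipliers :: "('a \<Rightarrow> real) \<Rightarrow> ('a \<Rightarrow> 'b::real_inner) \<Rightarrow> 'b set \<Rightarrow> 'b \<Rightarrow> 'a \<Rightarrow> 'b set" where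
  "M_multipliers Df Dg K y d = {l. l \<in> directional_normal_cone K y (Dg d) \<and> (\<forall>v. Df v + l \<bullet> Dg v = 0)}"

end

theory Submission
  imports Defs
begin

definition U :: "real \<Rightarrow> 'a::real_normed_vector set \<Rightarrow> 'a \<Rightarrow> 'a \<Rightarrow> 'a set" where
  "U c S y v = {w. \<exists>t r ww. (\<forall>k. t k > 0 \<and> r k > 0) \<and> t \<longlonglongrightarrow> 0 \<and> r \<longlonglongrightarrow> 0
      \<and> (\<lambda>k. t k / r k) \<longlonglongrightarrow> c \<and> ww \<longlonglongrightarrow> w
      \<and> (\<forall>k. y + t k *\<^sub>R v + ((1/2) * t k * r k) *\<^sub>R ww k \<in> S)}"

lemma U0_eq: "asymptotic_second_order_tangent_cone S y v = U 0 S y v"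
  unfolding asymptotic_second_order_tangent_cone_def U_def by blast

lemma U1_eq: "second_order_tangent_set S y v = U 1 S y v"
proof (intro set_eqI iffI)
  fix w assume "w \<in> second_order_tangent_set S y v"
  then obtain t ww where h: "\<forall>k. t k > 0" "t \<longlonglongrightarrow> 0" "ww \<longlonglongrightarrow> w"
      "\<forall>k. y + t k *\<^sub>R v + ((1/2) * (t k)\<^sup>2) *\<^sub>R ww k \<in> S"
    unfolding second_order_tangent_set_def by blast
  have "(\<lambda>k. t k / t k) = (\<lambda>k. 1)" using h(1) by (metis less_irrefl divide_self)
  then have "(\<lambda>k. t k / t k) \<longlonglongrightarrow> 1" by simp
  moreover have "\<forall>k. y + t k *\<^sub>R v + ((1/2) * t k * t k) *\<^sub>R ww k \<in> S"
    using h(4) by (simp add: power2_eq_square mult.assoc)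
  ultimately show "w \<in> U 1 S y v" unfolding U_def using h by blast
next
  fix w assume "w \<in> U 1 S y v"
  then obtain t r ww where h: "\<forall>k. t k > 0 \<and> r k > 0" "t \<longlonglongrightarrow> 0" "r \<longlonglongrightarrow> 0"
      "(\<lambda>k. t k / r k) \<longlonglongrightarrow> 1" "ww \<longlonglongrightarrow> w"
      "\<forall>k. y + t k *\<^sub>R v + ((1/2) * t k * r k) *\<^sub>R ww k \<in> S"
    unfolding U_def by blast
  have "(\<lambda>k. inverse (t k / r k)) \<longlonglongrightarrow> inverse 1"
    by (rule tendsto_inverse[OF h(4)]) simp
  then have "(\<lambda>k. r k / t k) \<longlonglongrightarrow> 1" by simp
  then have c: "(\<lambda>k. (r k / t k) *\<^sub>R ww k) \<longlonglongrightarrow> 1 *\<^sub>R w"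
    by (intro tendsto_scaleR h(5))
  have "\<forall>k. y + t k *\<^sub>R v + ((1/2) * (t k)\<^sup>2) *\<^sub>R ((r k / t k) *\<^sub>R ww k) \<in> S"
  proof
    fix k
    have sc: "((1/2) * (t k)\<^sup>2) * (r k / t k) = (1/2) * t k * r k"
      using h(1) by (simp add: power2_eq_square field_simps)
    have "((1/2) * (t k)\<^sup>2) *\<^sub>R ((r k / t k) *\<^sub>R ww k) = ((1/2) * t k * r k) *\<^sub>R ww k"
      by (simp only: scaleR_scaleR sc)
    then show "y + t k *\<^sub>R v + ((1/2) * (t k)\<^sup>2) *\<^sub>R ((r k / t k) *\<^sub>R ww k) \<in> S"
      using h(6) by metis
  qed
  then show "w \<in> second_order_tangent_set S y v"
    unfolding second_order_tangent_set_def using h c by (intro CollectI exI[of _ t] exI[of _ "\<lambda>k. (r k / t k) *\<^sub>R ww k"]) auto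
qed

lemma dir_ev:
  fixes d :: "'a::real_normed_vector"
  assumes "\<rho> > 0" "\<delta> > 0" "\<forall>k. \<tau> k > 0" "\<tau> \<longlonglongrightarrow> 0" "p \<longlonglongrightarrow> d"
  shows "eventually (\<lambda>k. \<tau> k *\<^sub>R p k \<in> dir_nbhd \<rho> \<delta> d) sequentially"
proof -
  have "(\<lambda>k. \<tau> k *\<^sub>R p k) \<longlonglongrightarrow> 0 *\<^sub>R d" by (intro tendsto_scaleR assms)
  then have "(\<lambda>k. norm (\<tau> k *\<^sub>R p k)) \<longlonglongrightarrow> 0" using tendsto_norm by fastforce
  then have e1: "eventually (\<lambda>k. norm (\<tau> k *\<^sub>R p k) < \<delta>) sequentially"
    using assms(2) by (simp add: order_tendstoD(2))
  have e2: "eventually (\<lambda>k. norm (norm d *\<^sub>R p k - norm (p k) *\<^sub>R d) \<le> \<rho> * norm (p k) * norm d) sequentially"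
  proof (cases "d = 0")
    case True then show ?thesis by simp
  next
    case False
    have "(\<lambda>k. norm (norm d *\<^sub>R p k - norm (p k) *\<^sub>R d)) \<longlonglongrightarrow> norm (norm d *\<^sub>R d - norm d *\<^sub>R d)"
      by (intro tendsto_intros assms)
    then have l1: "(\<lambda>k. norm (norm d *\<^sub>R p k - norm (p k) *\<^sub>R d)) \<longlonglongrightarrow> 0" by simp
    have l2: "(\<lambda>k. \<rho> * norm (p k) * norm d) \<longlonglongrightarrow> \<rho> * norm d * norm d"
      by (intro tendsto_intros assms)
    have "0 < \<rho> * norm d * norm d" using False assms(1) by simp
    then have "eventually (\<lambda>k. norm (norm d *\<^sub>R p k - norm (p k) *\<^sub>R d) < (\<rho> * norm d * norm d)/2) sequentially"
      using order_tendstoD(2)[OF l1, of "(\<rho> * norm d * norm d)/2"] by simp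
    moreover have "eventually (\<lambda>k. (\<rho> * norm d * norm d)/2 < \<rho> * norm (p k) * norm d) sequentially"
      using order_tendstoD(1)[OF l2, of "(\<rho> * norm d * norm d)/2"] \<open>0 < \<rho> * norm d * norm d\<close> by simp
    ultimately show ?thesis by eventually_elim simp
  qed
  show ?thesis using e1 e2
  proof eventually_elim
    case (elim k)
    have t: "\<tau> k > 0" using assms(3) by simp
    have "norm (norm d *\<^sub>R (\<tau> k *\<^sub>R p k) - norm (\<tau> k *\<^sub>R p k) *\<^sub>R d)
        = \<tau> k * norm (norm d *\<^sub>R p k - norm (p k) *\<^sub>R d)"
    proof -
      have "norm d *\<^sub>R (\<tau> k *\<^sub>R p k) - norm (\<tau> k *\<^sub>R p k) *\<^sub>R d = \<tau> k *\<^sub>R (norm d *\<^sub>R p k - norm (p k) *\<^sub>R d)"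
        using t by (simp add: algebra_simps)
      then show ?thesis using t by simp
    qed
    also have "\<dots> \<le> \<tau> k * (\<rho> * norm (p k) * norm d)" using elim(2) t by (simp add: mult_left_mono)
    also have "\<dots> = \<rho> * norm (\<tau> k *\<^sub>R p k) * norm d" using t by simp
    finally show ?case unfolding dir_nbhd_def using elim(1) by simp
  qed
qed

lemma onorm_scaleR_id: "onorm (\<lambda>h::real. h *\<^sub>R c) = norm c"
proof -
  have "onorm (\<lambda>h::real. h *\<^sub>R c) = onorm (\<lambda>x::real. x) * norm c"
    by (rule onorm_scaleR_left) (rule bounded_linear_ident)
  moreover have "onorm (\<lambda>x::real. x) = 1" by (rule onorm_id)
  ultimately show ?thesis by simp
qed

lemma taylor_rem:
  fixes \<phi> :: "'a::real_normed_vector \<Rightarrow> 'c::real_normed_vector"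
  assumes d1: "\<And>x. (\<phi> has_derivative blinfun_apply (\<phi>' x)) (at x)"
    and d2: "(\<phi>' has_derivative blinfun_apply H2) (at x0)"
    and e: "e > 0"
  shows "\<exists>\<delta>>0. \<forall>u. norm u < \<delta> \<longrightarrow>
     norm (\<phi> (x0+u) - \<phi> x0 - \<phi>' x0 u - (1/2) *\<^sub>R H2 u u) \<le> e * (norm u)\<^sup>2"
proof -
  obtain \<delta> where \<delta>: "\<delta> > 0" and h\<delta>: "\<forall>y. norm (y - x0) < \<delta> \<longrightarrow>
      norm (\<phi>' y - \<phi>' x0 - H2 (y - x0)) \<le> e * norm (y - x0)"
    using d2[unfolded has_derivative_at_alt] e by blast
  have "\<forall>u. norm u < \<delta> \<longrightarrow>
     norm (\<phi> (x0+u) - \<phi> x0 - \<phi>' x0 u - (1/2) *\<^sub>R H2 u u) \<le> e * (norm u)\<^sup>2"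
  proof (intro allI impI)
    fix u :: 'a assume nu: "norm u < \<delta>"
    define \<psi> where "\<psi> s = \<phi> (x0 + s *\<^sub>R u) - s *\<^sub>R \<phi>' x0 u - (s\<^sup>2/2) *\<^sub>R H2 u u" for s :: real
    define D where "D s = \<phi>' (x0 + s *\<^sub>R u) u - \<phi>' x0 u - s *\<^sub>R H2 u u" for s :: real
    have der: "(\<psi> has_derivative (\<lambda>h. h *\<^sub>R D s)) (at s within {0..1})" for s
    proof -
      have a: "((\<lambda>s. x0 + s *\<^sub>R u) has_derivative (\<lambda>h. h *\<^sub>R u)) (at s within {0..1})"
        by (auto intro!: derivative_eq_intros)
      have b: "((\<lambda>s. \<phi> (x0 + s *\<^sub>R u)) has_derivative (\<lambda>h. \<phi>' (x0 + s *\<^sub>R u) (h *\<^sub>R u))) (at s within {0..1})"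
        by (rule has_derivative_compose[OF a d1])
      have c: "((\<lambda>s::real. s *\<^sub>R \<phi>' x0 u) has_derivative (\<lambda>h. h *\<^sub>R \<phi>' x0 u)) (at s within {0..1})"
        by (auto intro!: derivative_eq_intros)
      have c2: "((\<lambda>s::real. (s\<^sup>2/2) *\<^sub>R H2 u u) has_derivative (\<lambda>h. h *\<^sub>R (s *\<^sub>R H2 u u))) (at s within {0..1})"
        by (auto intro!: derivative_eq_intros simp: algebra_simps)
      have "(\<psi> has_derivative (\<lambda>h. \<phi>' (x0 + s *\<^sub>R u) (h *\<^sub>R u) - h *\<^sub>R \<phi>' x0 u - h *\<^sub>R (s *\<^sub>R H2 u u))) (at s within {0..1})"
        unfolding \<psi>_def by (intro has_derivative_diff b c c2)
      moreover have "(\<lambda>h. \<phi>' (x0 + s *\<^sub>R u) (h *\<^sub>R u) - h *\<^sub>R \<phi>' x0 u - h *\<^sub>R (s *\<^sub>R H2 u u)) = (\<lambda>h. h *\<^sub>R D s)"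
        unfolding D_def by (auto simp: blinfun.scaleR_right algebra_simps)
      ultimately show ?thesis by simp
    qed
    have bnd: "onorm (\<lambda>h. h *\<^sub>R D s) \<le> e * (norm u)\<^sup>2" if s: "s \<in> {0..1}" for s
    proof -
      have "D s = blinfun_apply (\<phi>' (x0 + s *\<^sub>R u) - \<phi>' x0 - H2 ((x0 + s *\<^sub>R u) - x0)) u"
        unfolding D_def by (simp add: blinfun.bilinear_simps)
      then have "norm (D s) \<le> norm (\<phi>' (x0 + s *\<^sub>R u) - \<phi>' x0 - H2 ((x0 + s *\<^sub>R u) - x0)) * norm u"
        using norm_blinfun by metis
      also have "\<dots> \<le> (e * norm ((x0 + s *\<^sub>R u) - x0)) * norm u"
      proof (rule mult_right_mono)
        have "norm ((x0 + s *\<^sub>R u) - x0) = \<bar>s\<bar> * norm u" by simp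
        also have "\<dots> \<le> norm u" using s by (auto intro: mult_left_le_one_le)
        finally show "norm (\<phi>' (x0 + s *\<^sub>R u) - \<phi>' x0 - H2 ((x0 + s *\<^sub>R u) - x0)) \<le> e * norm ((x0 + s *\<^sub>R u) - x0)"
          using h\<delta>[rule_format, of "x0 + s *\<^sub>R u"] nu by auto
      qed simp
      also have "\<dots> \<le> (e * norm u) * norm u"
      proof (intro mult_right_mono mult_left_mono)
        show "norm ((x0 + s *\<^sub>R u) - x0) \<le> norm u" using s by (auto intro: mult_left_le_one_le)
      qed (use e in auto)
      finally show ?thesis by (simp add: onorm_scaleR_id power2_eq_square mult.assoc)
    qed
    have "norm (\<psi> 1 - \<psi> 0) \<le> e * (norm u)\<^sup>2 * norm (1 - (0::real))"
      by (rule differentiable_bound[OF convex_real_interval(5) der bnd]) auto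
    moreover have "\<psi> 1 - \<psi> 0 = \<phi> (x0+u) - \<phi> x0 - \<phi>' x0 u - (1/2) *\<^sub>R H2 u u"
      unfolding \<psi>_def by simp
    ultimately show "norm (\<phi> (x0+u) - \<phi> x0 - \<phi>' x0 u - (1/2) *\<^sub>R H2 u u) \<le> e * (norm u)\<^sup>2" by simp
  qed
  then show ?thesis using \<delta> by blast
qed

lemma sq_sum_le: "(a + b)\<^sup>2 \<le> 2 * a\<^sup>2 + 2 * (b::real)\<^sup>2"
proof -
  have "0 \<le> (a - b)\<^sup>2" by simp
  then show ?thesis by (simp add: power2_eq_square algebra_simps)
qed

lemma taylor_seq:
  fixes \<phi> :: "'a::real_normed_vector \<Rightarrow> 'c::real_normed_vector"
  assumes d1: "\<And>x. (\<phi> has_derivative blinfun_apply (\<phi>' x)) (at x)"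
    and d2: "(\<phi>' has_derivative blinfun_apply H2) (at x0)"
    and tr: "\<forall>k. t k > 0 \<and> r k > 0" and t0: "t \<longlonglongrightarrow> 0" and r0: "r \<longlonglongrightarrow> 0"
    and tc: "(\<lambda>k. t k / r k) \<longlonglongrightarrow> c" and ww: "ww \<longlonglongrightarrow> w"
  shows "(\<lambda>k. (\<phi> (x0 + (t k *\<^sub>R d + ((1/2) * t k * r k) *\<^sub>R ww k)) - \<phi> x0 - t k *\<^sub>R \<phi>' x0 d)
            /\<^sub>R ((1/2) * t k * r k)) \<longlonglongrightarrow> \<phi>' x0 w + c *\<^sub>R H2 d d"
proof -
  define \<sigma> where "\<sigma> k = (1/2) * t k * r k" for k
  define u where "u k = t k *\<^sub>R d + \<sigma> k *\<^sub>R ww k" for k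
  define R where "R k = \<phi> (x0 + u k) - \<phi> x0 - \<phi>' x0 (u k) - (1/2) *\<^sub>R H2 (u k) (u k)" for k
  define Q where "Q k = (t k / r k) *\<^sub>R H2 d d + (t k/2) *\<^sub>R (H2 d (ww k) + H2 (ww k) d)
      + (\<sigma> k/2) *\<^sub>R H2 (ww k) (ww k)" for k
  have \<sigma>pos: "\<sigma> k > 0" for k using tr unfolding \<sigma>_def by simp
  have "(\<lambda>k. (1/2) * t k * r k) \<longlonglongrightarrow> (1/2) * 0 * 0" by (intro tendsto_intros t0 r0)
  then have \<sigma>0: "\<sigma> \<longlonglongrightarrow> 0" unfolding \<sigma>_def by simp
  have eq: "(\<phi> (x0 + (t k *\<^sub>R d + ((1/2) * t k * r k) *\<^sub>R ww k)) - \<phi> x0 - t k *\<^sub>R \<phi>' x0 d)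
            /\<^sub>R ((1/2) * t k * r k) = R k /\<^sub>R \<sigma> k + \<phi>' x0 (ww k) + Q k" for k
  proof -
    have s: "\<sigma> k \<noteq> 0" using \<sigma>pos[of k] by simp
    have tr': "t k > 0" "r k > 0" using tr by auto
    have HH: "H2 (u k) (u k) = (t k * t k) *\<^sub>R H2 d d + (t k * \<sigma> k) *\<^sub>R (H2 d (ww k) + H2 (ww k) d)
       + (\<sigma> k * \<sigma> k) *\<^sub>R H2 (ww k) (ww k)"
      unfolding u_def by (simp add: blinfun.bilinear_simps algebra_simps)
    have "\<sigma> k *\<^sub>R (R k /\<^sub>R \<sigma> k + \<phi>' x0 (ww k) + Q k) = R k + \<sigma> k *\<^sub>R \<phi>' x0 (ww k) + \<sigma> k *\<^sub>R Q k"
      using s by (simp add: algebra_simps)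
    also have "\<sigma> k *\<^sub>R Q k = (1/2) *\<^sub>R H2 (u k) (u k)"
    proof -
      have a: "\<sigma> k * (t k / r k) = (1/2) * (t k * t k)" unfolding \<sigma>_def using tr' by (simp add: field_simps)
      have a2: "\<sigma> k * (t k * 2) / r k = t k * t k" unfolding \<sigma>_def using tr' by (simp add: field_simps)
      show ?thesis unfolding HH Q_def
        by (simp add: scaleR_add_right scaleR_scaleR a a2 algebra_simps)
    qed
    also have "R k + \<sigma> k *\<^sub>R \<phi>' x0 (ww k) + (1/2) *\<^sub>R H2 (u k) (u k)
        = \<phi> (x0 + u k) - \<phi> x0 - t k *\<^sub>R \<phi>' x0 d"
      unfolding R_def u_def by (simp add: blinfun.bilinear_simps algebra_simps)
    finally have "\<sigma> k *\<^sub>R (R k /\<^sub>R \<sigma> k + \<phi>' x0 (ww k) + Q k) = \<phi> (x0 + u k) - \<phi> x0 - t k *\<^sub>R \<phi>' x0 d" .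
    then have "R k /\<^sub>R \<sigma> k + \<phi>' x0 (ww k) + Q k = (\<phi> (x0 + u k) - \<phi> x0 - t k *\<^sub>R \<phi>' x0 d) /\<^sub>R \<sigma> k"
      using s by (metis (no_types, lifting) scaleR_left_imp_eq scaleR_scaleR right_inverse scaleR_one)
    then show ?thesis unfolding u_def \<sigma>_def by simp
  qed
  have u0: "u \<longlonglongrightarrow> 0"
    unfolding u_def using tendsto_add[OF tendsto_scaleR[OF t0 tendsto_const] tendsto_scaleR[OF \<sigma>0 ww]] by simp
  have Qlim: "Q \<longlonglongrightarrow> c *\<^sub>R H2 d d + (0/2) *\<^sub>R (H2 d w + H2 w d) + (0/2) *\<^sub>R H2 w w"
    unfolding Q_def by (intro tendsto_intros tc t0 \<sigma>0 ww) simp_all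
  have Rlim: "(\<lambda>k. R k /\<^sub>R \<sigma> k) \<longlonglongrightarrow> 0"
  proof -
    define \<beta> where "\<beta> k = 4 * (t k / r k) * (norm d)\<^sup>2 + 2 * \<sigma> k * (norm (ww k))\<^sup>2" for k
    have \<beta>lim: "\<beta> \<longlonglongrightarrow> 4 * c * (norm d)\<^sup>2 + 2 * 0 * (norm w)\<^sup>2"
      unfolding \<beta>_def by (intro tendsto_intros tc \<sigma>0 ww)
    define B where "B = \<bar>4 * c * (norm d)\<^sup>2\<bar> + 1"
    have Bpos: "B > 0" unfolding B_def by simp
    have evB: "eventually (\<lambda>k. \<beta> k < B) sequentially"
      using order_tendstoD(2)[OF \<beta>lim, of B] unfolding B_def by simp
    have ub: "(norm (u k))\<^sup>2 \<le> \<sigma> k * \<beta> k" for k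
    proof -
      have tr': "t k > 0" "r k > 0" using tr by auto
      have "norm (u k) \<le> t k * norm d + \<sigma> k * norm (ww k)"
        unfolding u_def using norm_triangle_ineq[of "t k *\<^sub>R d" "\<sigma> k *\<^sub>R ww k"] tr' \<sigma>pos[of k] by simp
      then have "(norm (u k))\<^sup>2 \<le> (t k * norm d + \<sigma> k * norm (ww k))\<^sup>2"
        by (intro power_mono) auto
      also have "\<dots> \<le> 2 * (t k * norm d)\<^sup>2 + 2 * (\<sigma> k * norm (ww k))\<^sup>2"
        by (rule sq_sum_le)
      also have "\<dots> = \<sigma> k * \<beta> k"
        unfolding \<beta>_def \<sigma>_def using tr' by (simp add: power2_eq_square field_simps)
      finally show ?thesis .
    qed
    show ?thesis
    proof (rule tendstoI)
      fix e :: real assume e: "e > 0"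
      define e' where "e' = e / (2 * B)"
      have e': "e' > 0" unfolding e'_def using e Bpos by simp
      obtain \<delta> where \<delta>: "\<delta> > 0" and h\<delta>: "\<forall>u. norm u < \<delta> \<longrightarrow>
          norm (\<phi> (x0+u) - \<phi> x0 - \<phi>' x0 u - (1/2) *\<^sub>R H2 u u) \<le> e' * (norm u)\<^sup>2"
        using taylor_rem[OF d1 d2 e'] by blast
      have evu: "eventually (\<lambda>k. norm (u k) < \<delta>) sequentially"
        using order_tendstoD(2)[OF tendsto_norm[OF u0], of \<delta>] \<delta> by simp
      show "eventually (\<lambda>k. dist (R k /\<^sub>R \<sigma> k) 0 < e) sequentially"
        using evu evB
      proof eventually_elim
        case (elim k)
        have "norm (R k) \<le> e' * (norm (u k))\<^sup>2" unfolding R_def using h\<delta> elim(1) by blast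
        also have "\<dots> \<le> e' * (\<sigma> k * \<beta> k)" using ub[of k] e' by (simp add: mult_left_mono)
        also have "\<dots> \<le> e' * (\<sigma> k * B)" using elim(2) e' \<sigma>pos[of k] by (simp add: mult_left_mono)
        also have "\<dots> < e * \<sigma> k" unfolding e'_def using Bpos \<sigma>pos[of k] e by (simp add: field_simps)
        finally have "norm (R k) < e * \<sigma> k" .
        then show ?case using \<sigma>pos[of k] by (simp add: field_simps)
      qed
    qed
  qed
  have "(\<lambda>k. R k /\<^sub>R \<sigma> k + \<phi>' x0 (ww k) + Q k) \<longlonglongrightarrow> 0 + \<phi>' x0 w + (c *\<^sub>R H2 d d + (0/2) *\<^sub>R (H2 d w + H2 w d) + (0/2) *\<^sub>R H2 w w)"
    by (intro tendsto_add Rlim Qlim blinfun.tendsto[OF tendsto_const ww])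
  then show ?thesis unfolding eq by simp
qed

lemma chain_U:
  fixes g :: "'a::real_normed_vector \<Rightarrow> 'b::real_normed_vector"
  assumes g1: "\<And>x. (g has_derivative blinfun_apply (g' x)) (at x)"
    and g2: "(g' has_derivative blinfun_apply (g'' xbar)) (at xbar)"
    and w: "w \<in> U c (g -` K) xbar d"
  shows "g' xbar w + c *\<^sub>R g'' xbar d d \<in> U c K (g xbar) (g' xbar d)"
proof -
  obtain t r ww where h: "\<forall>k. t k > 0 \<and> r k > 0" "t \<longlonglongrightarrow> 0" "r \<longlonglongrightarrow> 0"
      "(\<lambda>k. t k / r k) \<longlonglongrightarrow> c" "ww \<longlonglongrightarrow> w"
      "\<forall>k. xbar + t k *\<^sub>R d + ((1/2) * t k * r k) *\<^sub>R ww k \<in> g -` K"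
    using w unfolding U_def by blast
  define zz where "zz k = (g (xbar + (t k *\<^sub>R d + ((1/2) * t k * r k) *\<^sub>R ww k)) - g xbar - t k *\<^sub>R g' xbar d)
            /\<^sub>R ((1/2) * t k * r k)" for k
  have lim: "zz \<longlonglongrightarrow> g' xbar w + c *\<^sub>R g'' xbar d d"
    unfolding zz_def by (rule taylor_seq[OF g1 g2 h(1-5)])
  have "g xbar + t k *\<^sub>R g' xbar d + ((1/2) * t k * r k) *\<^sub>R zz k \<in> K" for k
  proof -
    have "(1/2) * t k * r k \<noteq> 0" using h(1) by (simp add: less_imp_neq[symmetric])
    then have "g xbar + t k *\<^sub>R g' xbar d + ((1/2) * t k * r k) *\<^sub>R zz k
       = g (xbar + t k *\<^sub>R d + ((1/2) * t k * r k) *\<^sub>R ww k)"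
      unfolding zz_def by (simp add: add.assoc)
    then show ?thesis using h(6) by simp
  qed
  then show ?thesis unfolding U_def using h(1-4) lim by blast
qed

lemma opt_U:
  fixes f :: "'a::real_normed_vector \<Rightarrow> real"
  assumes f1: "\<And>x. (f has_derivative blinfun_apply (f' x)) (at x)"
    and f2: "(f' has_derivative blinfun_apply (f'' xbar)) (at xbar)"
    and opt: "local_opt_dir f C xbar d"
    and crit: "f' xbar d = 0"
    and w: "w \<in> U c C xbar d"
  shows "f' xbar w + c * f'' xbar d d \<ge> 0"
proof -
  obtain t r ww where h: "\<forall>k. t k > 0 \<and> r k > 0" "t \<longlonglongrightarrow> 0" "r \<longlonglongrightarrow> 0"
      "(\<lambda>k. t k / r k) \<longlonglongrightarrow> c" "ww \<longlonglongrightarrow> w"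
      "\<forall>k. xbar + t k *\<^sub>R d + ((1/2) * t k * r k) *\<^sub>R ww k \<in> C"
    using w unfolding U_def by blast
  obtain \<rho> \<delta> where \<rho>: "\<rho> > 0" "\<delta> > 0" and hopt: "\<forall>w\<in>dir_nbhd \<rho> \<delta> d.
      xbar + w \<in> C \<longrightarrow> f xbar \<le> f (xbar + w)"
    using opt unfolding local_opt_dir_def by blast
  have lim: "(\<lambda>k. (f (xbar + (t k *\<^sub>R d + ((1/2) * t k * r k) *\<^sub>R ww k)) - f xbar - t k *\<^sub>R f' xbar d)
            /\<^sub>R ((1/2) * t k * r k)) \<longlonglongrightarrow> f' xbar w + c *\<^sub>R f'' xbar d d"
    by (rule taylor_seq[OF f1 f2 h(1-5)])
  have p: "(\<lambda>k. d + (r k / 2) *\<^sub>R ww k) \<longlonglongrightarrow> d + (0/2) *\<^sub>R w"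
    by (intro tendsto_intros h(3,5)) simp
  have ev: "eventually (\<lambda>k. t k *\<^sub>R (d + (r k / 2) *\<^sub>R ww k) \<in> dir_nbhd \<rho> \<delta> d) sequentially"
    using dir_ev[OF \<rho> _ h(2) p[simplified]] h(1) by blast
  have "eventually (\<lambda>k. 0 \<le> (f (xbar + (t k *\<^sub>R d + ((1/2) * t k * r k) *\<^sub>R ww k)) - f xbar - t k *\<^sub>R f' xbar d)
            /\<^sub>R ((1/2) * t k * r k)) sequentially"
    using ev
  proof eventually_elim
    case (elim k)
    have eq: "t k *\<^sub>R (d + (r k / 2) *\<^sub>R ww k) = t k *\<^sub>R d + ((1/2) * t k * r k) *\<^sub>R ww k"
      by (simp add: algebra_simps)
    have "f xbar \<le> f (xbar + (t k *\<^sub>R d + ((1/2) * t k * r k) *\<^sub>R ww k))"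
      using hopt elim h(6) unfolding eq by (simp add: add.assoc)
    moreover have "t k * r k > 0" using h(1) by simp
    ultimately show ?case using crit by simp
  qed
  from tendsto_lowerbound[OF lim this] show ?thesis by simp
qed

lemma subreg_U:
  fixes g :: "'a::euclidean_space \<Rightarrow> 'b::euclidean_space"
  assumes g1: "\<And>x. (g has_derivative blinfun_apply (g' x)) (at x)"
    and g2: "(g' has_derivative blinfun_apply (g'' xbar)) (at xbar)"
    and Kc: "closed K" and xC: "g xbar \<in> K"
    and \<rho>: "\<rho> > 0" "\<delta> > 0" and \<kappa>: "\<kappa> > 0"
    and ms: "\<forall>u\<in>dir_nbhd \<rho> \<delta> d. infdist (xbar+u) (g -` K) \<le> \<kappa> * infdist (g (xbar+u)) K"
    and z: "z \<in> U c K (g xbar) (g' xbar d)"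
  shows "\<exists>w'\<in>U c (g -` K) xbar d. norm (w' - w) \<le> \<kappa> * norm (g' xbar w + c *\<^sub>R g'' xbar d d - z)"
proof -
  obtain t r zz where h: "\<forall>k. t k > 0 \<and> r k > 0" "t \<longlonglongrightarrow> 0" "r \<longlonglongrightarrow> 0"
      "(\<lambda>k. t k / r k) \<longlonglongrightarrow> c" "zz \<longlonglongrightarrow> z"
      "\<forall>k. g xbar + t k *\<^sub>R g' xbar d + ((1/2) * t k * r k) *\<^sub>R zz k \<in> K"
    using z unfolding U_def by blast
  define \<sigma> where "\<sigma> k = (1/2) * t k * r k" for k
  have \<sigma>pos: "\<sigma> k > 0" for k using h(1) unfolding \<sigma>_def by simp
  define x where "x k = xbar + (t k *\<^sub>R d + \<sigma> k *\<^sub>R w)" for k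
  define \<zeta> where "\<zeta> k = (g (xbar + (t k *\<^sub>R d + ((1/2) * t k * r k) *\<^sub>R w)) - g xbar - t k *\<^sub>R g' xbar d)
            /\<^sub>R ((1/2) * t k * r k)" for k
  have \<zeta>lim: "\<zeta> \<longlonglongrightarrow> g' xbar w + c *\<^sub>R g'' xbar d d"
    unfolding \<zeta>_def by (rule taylor_seq[OF g1 g2 h(1-4) tendsto_const])
  have gx: "g (x k) = g xbar + t k *\<^sub>R g' xbar d + \<sigma> k *\<^sub>R \<zeta> k" for k
    using \<sigma>pos[of k] h(1)[rule_format, of k] unfolding x_def \<zeta>_def \<sigma>_def by simp
  define C where "C = g -` K"
  have cont: "continuous_on UNIV g"
    by (rule has_derivative_continuous_on) (use g1 has_derivative_at_withinI in blast)
  have Cc: "closed C" unfolding C_def by (rule closed_vimage[OF Kc cont])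
  have Cne: "C \<noteq> {}" using xC unfolding C_def by blast
  have "\<forall>k. \<exists>c. c \<in> C \<and> infdist (x k) C = dist (x k) c"
    using infdist_attains_inf[OF Cc Cne] by metis
  then obtain cc where cc: "\<And>k. cc k \<in> C \<and> infdist (x k) C = dist (x k) (cc k)"
    by metis
  have p: "(\<lambda>k. d + (r k / 2) *\<^sub>R w) \<longlonglongrightarrow> d + (0/2) *\<^sub>R w"
    by (intro tendsto_intros h(3)) simp
  have ev: "eventually (\<lambda>k. t k *\<^sub>R (d + (r k / 2) *\<^sub>R w) \<in> dir_nbhd \<rho> \<delta> d) sequentially"
    using dir_ev[OF \<rho> _ h(2) p[simplified]] h(1) by blast
  define D where "D k = norm (\<zeta> k - zz k)" for k
  define w' where "w' k = w + (cc k - x k) /\<^sub>R \<sigma> k" for k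
  have w'C: "xbar + t k *\<^sub>R d + ((1/2) * t k * r k) *\<^sub>R w' k \<in> C" for k
  proof -
    have "xbar + t k *\<^sub>R d + ((1/2) * t k * r k) *\<^sub>R w' k = cc k"
      using \<sigma>pos[of k] h(1)[rule_format, of k] unfolding w'_def x_def \<sigma>_def by (simp add: algebra_simps)
    then show ?thesis using cc by simp
  qed
  have evb: "eventually (\<lambda>k. norm (w' k - w) \<le> \<kappa> * D k) sequentially"
    using ev
  proof eventually_elim
    case (elim k)
    have eq: "t k *\<^sub>R (d + (r k / 2) *\<^sub>R w) = t k *\<^sub>R d + \<sigma> k *\<^sub>R w"
      unfolding \<sigma>_def by (simp add: algebra_simps)
    have "infdist (x k) C \<le> \<kappa> * infdist (g (x k)) K"
      using ms elim unfolding eq x_def C_def by blast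
    also have "infdist (g (x k)) K \<le> dist (g (x k)) (g xbar + t k *\<^sub>R g' xbar d + \<sigma> k *\<^sub>R zz k)"
      by (rule infdist_le) (use h(6) in \<open>simp add: \<sigma>_def\<close>)
    also have "\<dots> = \<sigma> k * D k"
    proof -
      have "g (x k) - (g xbar + t k *\<^sub>R g' xbar d + \<sigma> k *\<^sub>R zz k) = \<sigma> k *\<^sub>R (\<zeta> k - zz k)"
        unfolding gx by (simp add: algebra_simps)
      then show ?thesis unfolding dist_norm D_def using \<sigma>pos[of k] by simp
    qed
    finally have "dist (x k) (cc k) \<le> \<kappa> * (\<sigma> k * D k)"
      using cc[of k] \<kappa> by (simp add: mult_left_mono)
    moreover have "norm (w' k - w) = dist (x k) (cc k) / \<sigma> k"
      unfolding w'_def using \<sigma>pos[of k] by (simp add: dist_norm norm_minus_commute divide_inverse_commute)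
    ultimately have "\<sigma> k * norm (w' k - w) \<le> \<sigma> k * (\<kappa> * D k)"
      using \<sigma>pos[of k] by (simp add: field_simps)
    then show ?case using \<sigma>pos[of k] by (simp add: mult_le_cancel_left_pos)
  qed
  then obtain N where hN: "\<forall>k\<ge>N. norm (w' k - w) \<le> \<kappa> * D k"
    unfolding eventually_sequentially by blast
  have Dlim: "D \<longlonglongrightarrow> norm (g' xbar w + c *\<^sub>R g'' xbar d d - z)"
    unfolding D_def by (intro tendsto_intros \<zeta>lim h(5))
  obtain B where B: "B > 0" "\<forall>k. norm (D k) \<le> B"
    using convergent_imp_Bseq[of D] Dlim BseqE unfolding convergent_def by metis
  define q where "q k = w' (k + N)" for k
  have "norm (q k) \<le> norm w + \<kappa> * B" for k
  proof -
    have "norm (q k - w) \<le> \<kappa> * D (k + N)" unfolding q_def using hN by simp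
    also have "\<dots> \<le> \<kappa> * B" using B(2)[rule_format, of "k+N"] \<kappa> by (simp add: mult_left_mono)
    finally show ?thesis using norm_triangle_ineq2[of "q k" w] by simp
  qed
  then have "bounded (range q)" unfolding bounded_iff by blast
  then obtain wst \<phi> where \<phi>: "strict_mono \<phi>" "(q \<circ> \<phi>) \<longlonglongrightarrow> wst"
    using bounded_imp_convergent_subsequence by blast
  define \<psi> where "\<psi> k = \<phi> k + N" for k
  have \<psi>: "strict_mono \<psi>" unfolding \<psi>_def using \<phi>(1) by (simp add: strict_mono_def)
  have qeq: "q \<circ> \<phi> = w' \<circ> \<psi>" unfolding q_def \<psi>_def by auto
  have "wst \<in> U c C xbar d"
    unfolding U_def
  proof (intro CollectI exI conjI)
    show "\<forall>k. (t \<circ> \<psi>) k > 0 \<and> (r \<circ> \<psi>) k > 0" using h(1) by simp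
    show "(t \<circ> \<psi>) \<longlonglongrightarrow> 0" by (rule LIMSEQ_subseq_LIMSEQ[OF h(2) \<psi>])
    show "(r \<circ> \<psi>) \<longlonglongrightarrow> 0" by (rule LIMSEQ_subseq_LIMSEQ[OF h(3) \<psi>])
    show "(\<lambda>k. (t \<circ> \<psi>) k / (r \<circ> \<psi>) k) \<longlonglongrightarrow> c"
      using LIMSEQ_subseq_LIMSEQ[OF h(4) \<psi>] by (simp add: comp_def)
    show "(w' \<circ> \<psi>) \<longlonglongrightarrow> wst" using \<phi>(2) qeq by simp
    show "\<forall>k. xbar + (t \<circ> \<psi>) k *\<^sub>R d + ((1/2) * (t \<circ> \<psi>) k * (r \<circ> \<psi>) k) *\<^sub>R (w' \<circ> \<psi>) k \<in> C"
      using w'C by simp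
  qed
  moreover have "norm (wst - w) \<le> \<kappa> * norm (g' xbar w + c *\<^sub>R g'' xbar d d - z)"
  proof (rule LIMSEQ_le)
    show "(\<lambda>k. norm ((w' \<circ> \<psi>) k - w)) \<longlonglongrightarrow> norm (wst - w)"
      using \<phi>(2) qeq by (intro tendsto_intros) (simp add: comp_def)
    show "(\<lambda>k. \<kappa> * (D \<circ> \<psi>) k) \<longlonglongrightarrow> \<kappa> * norm (g' xbar w + c *\<^sub>R g'' xbar d d - z)"
      by (intro tendsto_intros LIMSEQ_subseq_LIMSEQ[OF Dlim \<psi>])
    show "\<exists>M. \<forall>k\<ge>M. norm ((w' \<circ> \<psi>) k - w) \<le> \<kappa> * (D \<circ> \<psi>) k"
      using hN unfolding \<psi>_def by auto
  qed
  ultimately show ?thesis unfolding C_def by blast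
qed

lemma null_by_inv:
  fixes f :: "nat \<Rightarrow> 'c::real_normed_vector"
  assumes "\<And>n. norm (f n) \<le> inverse (real (Suc n))"
  shows "f \<longlonglongrightarrow> 0"
  by (rule Lim_null_comparison[OF _ LIMSEQ_inverse_real_of_nat]) (use assms in auto)

lemma choice3:
  assumes h0: "\<forall>n::nat. \<exists>t r ww. P n t r ww"
  shows "\<exists>T R WW. \<forall>n. P n (T n) (R n) (WW n)"
proof -
  from h0 have "\<forall>n. \<exists>p. P n (fst p) (fst (snd p)) (snd (snd p))" by auto
  then obtain F where "\<forall>n. P n (fst (F n)) (fst (snd (F n))) (snd (snd (F n)))" by (rule choice[THEN exE])
  then show ?thesis
    by (intro exI[of _ "\<lambda>n. fst (F n)"] exI[of _ "\<lambda>n. fst (snd (F n))"] exI[of _ "\<lambda>n. snd (snd (F n))"]) simp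
qed

lemma closed_U: "closed (U c S y v)"
  unfolding closed_sequential_limits
proof (intro allI impI, elim conjE)
  fix x l assume xU: "\<forall>n. x n \<in> U c S y v" and xl: "x \<longlonglongrightarrow> l"
  have ex1: "\<forall>n. \<exists>t r ww. (\<forall>k. t k > 0 \<and> r k > 0) \<and> t \<longlonglongrightarrow> 0 \<and> r \<longlonglongrightarrow> 0
      \<and> (\<lambda>k. t k / r k) \<longlonglongrightarrow> c \<and> ww \<longlonglongrightarrow> x n
      \<and> (\<forall>k. y + t k *\<^sub>R v + ((1/2) * t k * r k) *\<^sub>R ww k \<in> S)"
    using xU unfolding U_def by blast
  obtain T R WW where h: "\<And>n. (\<forall>k. T n k > 0 \<and> R n k > 0) \<and> T n \<longlonglongrightarrow> 0 \<and> R n \<longlonglongrightarrow> 0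
      \<and> (\<lambda>k. T n k / R n k) \<longlonglongrightarrow> c \<and> WW n \<longlonglongrightarrow> x n
      \<and> (\<forall>k. y + T n k *\<^sub>R v + ((1/2) * T n k * R n k) *\<^sub>R WW n k \<in> S)"
    using choice3[OF ex1] by blast
  have ex2: "\<forall>n. \<exists>m. T n m < inverse (real (Suc n)) \<and> R n m < inverse (real (Suc n))
      \<and> norm (T n m / R n m - c) < inverse (real (Suc n)) \<and> norm (WW n m - x n) < inverse (real (Suc n))"
  proof
    fix n
    define e where "e = inverse (real (Suc n))"
    have e: "e > 0" unfolding e_def by simp
    have "eventually (\<lambda>m. T n m < e) sequentially" using order_tendstoD(2)[of "T n" 0 sequentially e] h e by blast
    moreover have "eventually (\<lambda>m. R n m < e) sequentially" using order_tendstoD(2)[of "R n" 0 sequentially e] h e by blast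
    moreover have "eventually (\<lambda>m. dist (T n m / R n m) c < e) sequentially"
      using h[of n] e by (auto simp: tendsto_iff)
    moreover have "eventually (\<lambda>m. dist (WW n m) (x n) < e) sequentially"
      using h[of n] e by (auto simp: tendsto_iff)
    ultimately have "eventually (\<lambda>m. T n m < e \<and> R n m < e \<and> norm (T n m / R n m - c) < e \<and> norm (WW n m - x n) < e) sequentially"
      by eventually_elim (simp add: dist_norm)
    then show "\<exists>m. T n m < inverse (real (Suc n)) \<and> R n m < inverse (real (Suc n))
      \<and> norm (T n m / R n m - c) < inverse (real (Suc n)) \<and> norm (WW n m - x n) < inverse (real (Suc n))"
      unfolding e_def using eventually_happens'[OF trivial_limit_sequentially] by blast
  qed
  obtain M where M: "\<And>n. T n (M n) < inverse (real (Suc n)) \<and> R n (M n) < inverse (real (Suc n))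
      \<and> norm (T n (M n) / R n (M n) - c) < inverse (real (Suc n)) \<and> norm (WW n (M n) - x n) < inverse (real (Suc n))"
    using choice[OF ex2] by blast
  show "l \<in> U c S y v" unfolding U_def
  proof (intro CollectI exI conjI)
    show "\<forall>n. T n (M n) > 0 \<and> R n (M n) > 0" using h by blast
    show "(\<lambda>n. T n (M n)) \<longlonglongrightarrow> 0"
      by (rule null_by_inv) (use M h in \<open>auto intro: less_imp_le simp: abs_of_pos\<close>)
    show "(\<lambda>n. R n (M n)) \<longlonglongrightarrow> 0"
      by (rule null_by_inv) (use M h in \<open>auto intro: less_imp_le simp: abs_of_pos\<close>)
    show "(\<lambda>n. T n (M n) / R n (M n)) \<longlonglongrightarrow> c"
      by (rule LIM_zero_cancel, rule null_by_inv) (use M in \<open>auto intro: less_imp_le\<close>)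
    have "(\<lambda>n. WW n (M n) - x n) \<longlonglongrightarrow> 0"
      by (rule null_by_inv) (use M in \<open>auto intro: less_imp_le\<close>)
    from tendsto_add[OF this xl] show "(\<lambda>n. WW n (M n)) \<longlonglongrightarrow> l" by simp
    show "\<forall>n. y + T n (M n) *\<^sub>R v + ((1/2) * T n (M n) * R n (M n)) *\<^sub>R WW n (M n) \<in> S"
      using h by blast
  qed
qed

lemma zero_U0:
  assumes d: "d \<in> tangent_cone C xbar"
  shows "0 \<in> U 0 C xbar d"
proof -
  obtain t dd where h: "\<forall>k. t k > 0" "t \<longlonglongrightarrow> 0" "dd \<longlonglongrightarrow> d" "\<forall>k. xbar + t k *\<^sub>R dd k \<in> C"
    using d unfolding tangent_cone_def by blast
  define r where "r k = max (sqrt (norm (dd k - d))) (sqrt (t k))" for k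
  have rpos: "r k > 0" for k unfolding r_def using h(1) by (simp add: less_max_iff_disj)
  have nd: "(\<lambda>k. norm (dd k - d)) \<longlonglongrightarrow> 0"
    using h(3) by (simp add: LIM_zero tendsto_norm_zero)
  have r0: "r \<longlonglongrightarrow> 0"
  proof -
    have "(\<lambda>k. max (sqrt (norm (dd k - d))) (sqrt (t k))) \<longlonglongrightarrow> max (sqrt 0) (sqrt 0)"
      by (intro tendsto_intros nd h(2))
    then show ?thesis unfolding r_def by simp
  qed
  define ww where "ww k = (2 / r k) *\<^sub>R (dd k - d)" for k
  show ?thesis unfolding U_def
  proof (intro CollectI exI conjI)
    show "\<forall>k. t k > 0 \<and> r k > 0" using h(1) rpos by simp
    show "t \<longlonglongrightarrow> 0" by (rule h(2))
    show "r \<longlonglongrightarrow> 0" by (rule r0)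
    show "(\<lambda>k. t k / r k) \<longlonglongrightarrow> 0"
    proof (rule Lim_null_comparison[where g="\<lambda>k. sqrt (t k)"])
      show "eventually (\<lambda>k. norm (t k / r k) \<le> sqrt (t k)) sequentially"
      proof (intro always_eventually allI)
        fix k
        have tk: "t k > 0" using h(1) by simp
        have "sqrt (t k) \<le> r k" unfolding r_def by simp
        then have "t k / r k \<le> t k / sqrt (t k)"
          using tk rpos[of k] by (intro divide_left_mono) auto
        also have "\<dots> = sqrt (t k)" using tk by (simp add: real_div_sqrt)
        finally show "norm (t k / r k) \<le> sqrt (t k)" using tk rpos[of k] by simp
      qed
      show "(\<lambda>k. sqrt (t k)) \<longlonglongrightarrow> 0" using tendsto_real_sqrt[OF h(2)] by simp
    qed
    show "ww \<longlonglongrightarrow> 0"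
    proof (rule Lim_null_comparison[where g="\<lambda>k. 2 * sqrt (norm (dd k - d))"])
      show "eventually (\<lambda>k. norm (ww k) \<le> 2 * sqrt (norm (dd k - d))) sequentially"
      proof (intro always_eventually allI)
        fix k
        have "norm (ww k) = 2 * norm (dd k - d) / r k" unfolding ww_def using rpos[of k] by simp
        also have "\<dots> \<le> 2 * sqrt (norm (dd k - d))"
        proof (cases "norm (dd k - d) = 0")
          case True then show ?thesis by simp
        next
          case False
          then have np: "norm (dd k - d) > 0" by simp
          have "sqrt (norm (dd k - d)) \<le> r k" unfolding r_def by simp
          then have "norm (dd k - d) / r k \<le> norm (dd k - d) / sqrt (norm (dd k - d))"
            using np rpos[of k] by (intro divide_left_mono) auto
          also have "\<dots> = sqrt (norm (dd k - d))" using np by (simp add: real_div_sqrt)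
          finally show ?thesis by simp
        qed
        finally show "norm (ww k) \<le> 2 * sqrt (norm (dd k - d))" .
      qed
      show "(\<lambda>k. 2 * sqrt (norm (dd k - d))) \<longlonglongrightarrow> 0"
        using tendsto_mult[OF tendsto_const tendsto_real_sqrt[OF nd], of 2] by simp
    qed
    show "\<forall>k. xbar + t k *\<^sub>R d + ((1/2) * t k * r k) *\<^sub>R ww k \<in> C"
    proof
      fix k
      have "xbar + t k *\<^sub>R d + ((1/2) * t k * r k) *\<^sub>R ww k = xbar + t k *\<^sub>R dd k"
        unfolding ww_def using rpos[of k] by (simp add: algebra_simps)
      then show "xbar + t k *\<^sub>R d + ((1/2) * t k * r k) *\<^sub>R ww k \<in> C" using h(4) by (metis add.assoc)
    qed
  qed
qed

lemma dnc_intro: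
  assumes h: "\<forall>e>0. \<exists>t vs ls. t > 0 \<and> t < e \<and> norm (vs - v) < e \<and> norm (ls - \<xi>) < e
      \<and> ls \<in> regular_normal_cone K (y + t *\<^sub>R vs)"
  shows "\<xi> \<in> directional_normal_cone K y v"
proof -
  have ex: "\<forall>n. \<exists>t vs ls. t > 0 \<and> t < inverse (real (Suc n)) \<and> norm (vs - v) < inverse (real (Suc n))
      \<and> norm (ls - \<xi>) < inverse (real (Suc n)) \<and> ls \<in> regular_normal_cone K (y + t *\<^sub>R vs)"
    using h by simp
  obtain T VS LS where H: "\<forall>n. T n > 0 \<and> T n < inverse (real (Suc n)) \<and> norm (VS n - v) < inverse (real (Suc n))
      \<and> norm (LS n - \<xi>) < inverse (real (Suc n)) \<and> LS n \<in> regular_normal_cone K (y + T n *\<^sub>R VS n)"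
    using choice3[OF ex] by blast
  show ?thesis unfolding directional_normal_cone_def
  proof (intro CollectI exI conjI)
    show "\<forall>k. T k > 0" using H by blast
    show "T \<longlonglongrightarrow> 0"
    proof (rule null_by_inv)
      fix n show "norm (T n) \<le> inverse (real (Suc n))" using H[rule_format, of n] by simp
    qed
    show "VS \<longlonglongrightarrow> v" by (rule LIM_zero_cancel, rule null_by_inv) (use H in \<open>auto intro: less_imp_le\<close>)
    show "LS \<longlonglongrightarrow> \<xi>" by (rule LIM_zero_cancel, rule null_by_inv) (use H in \<open>auto intro: less_imp_le\<close>)
    show "\<forall>k. LS k \<in> regular_normal_cone K (y + T k *\<^sub>R VS k)" using H by blast
  qed
qed

lemma dnc_closed:
  assumes l: "\<forall>n. l n \<in> directional_normal_cone K y v" and L: "l \<longlonglongrightarrow> L"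
  shows "L \<in> directional_normal_cone K y v"
proof (rule dnc_intro, intro allI impI)
  fix e :: real assume e: "e > 0"
  obtain n where n: "norm (l n - L) < e/2"
    using L e unfolding LIMSEQ_iff by (metis half_gt_zero le_refl)
  obtain t vs ls where h: "\<forall>k. t k > 0" "t \<longlonglongrightarrow> 0" "vs \<longlonglongrightarrow> v" "ls \<longlonglongrightarrow> l n"
      "\<forall>k. ls k \<in> regular_normal_cone K (y + t k *\<^sub>R vs k)"
    using l unfolding directional_normal_cone_def by blast
  have "eventually (\<lambda>k. t k < e) sequentially" using order_tendstoD(2)[OF h(2)] e by blast
  moreover have "eventually (\<lambda>k. dist (vs k) v < e) sequentially" using h(3) e by (auto simp: tendsto_iff)
  moreover have "eventually (\<lambda>k. dist (ls k) (l n) < e/2) sequentially" using h(4)[unfolded tendsto_iff, rule_format, of "e/2"] e by simp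
  ultimately have "eventually (\<lambda>k. t k < e \<and> dist (vs k) v < e \<and> dist (ls k) (l n) < e/2) sequentially"
    by eventually_elim simp
  then obtain k where k: "t k < e" "dist (vs k) v < e" "dist (ls k) (l n) < e/2"
    using eventually_happens'[OF trivial_limit_sequentially] by blast
  have "norm (ls k - L) < e"
    using norm_triangle_ineq[of "ls k - l n" "l n - L"] k(3) n by (simp add: dist_norm)
  then show "\<exists>t vs ls. t > 0 \<and> t < e \<and> norm (vs - v) < e \<and> norm (ls - L) < e
      \<and> ls \<in> regular_normal_cone K (y + t *\<^sub>R vs)"
    using h(1,5) k by (intro exI[of _ "t k"] exI[of _ "vs k"] exI[of _ "ls k"]) (simp add: dist_norm)
qed

lemma norm_add_sq: "(norm (a + b))\<^sup>2 = (norm a)\<^sup>2 + 2 * (a \<bullet> b) + (norm (b::'a::real_inner))\<^sup>2"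
  by (simp add: power2_norm_eq_inner inner_add inner_commute algebra_simps)

lemma fermat_scaled:
  fixes K :: "'b::real_inner set"
  assumes \<sigma>: "\<sigma> > 0" and M: "M > 0" and \<rho>: "\<rho> > 0"
    and uz: "norm (u - z) < \<rho>/2"
    and pK: "y0 + \<sigma> *\<^sub>R u \<in> K"
    and mn: "\<forall>u'. y0 + \<sigma> *\<^sub>R u' \<in> K \<longrightarrow> norm (u' - z) \<le> \<rho> \<longrightarrow>
       - (\<xi> \<bullet> u) + M * (norm (u - z))\<^sup>2 \<le> - (\<xi> \<bullet> u') + M * (norm (u' - z))\<^sup>2"
  shows "\<xi> - (2*M) *\<^sub>R (u - z) \<in> regular_normal_cone K (y0 + \<sigma> *\<^sub>R u)"
  unfolding regular_normal_cone_def
proof (intro CollectI conjI pK allI impI)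
  fix e' :: real assume e': "e' > 0"
  define p where "p = y0 + \<sigma> *\<^sub>R u"
  define ls where "ls = \<xi> - (2*M) *\<^sub>R (u - z)"
  show "\<exists>\<delta>>0. \<forall>y'\<in>K. norm (y' - (y0 + \<sigma> *\<^sub>R u)) < \<delta> \<longrightarrow>
      (\<xi> - (2*M) *\<^sub>R (u - z)) \<bullet> (y' - (y0 + \<sigma> *\<^sub>R u)) \<le> e' * norm (y' - (y0 + \<sigma> *\<^sub>R u))"
  proof (intro exI[of _ "\<sigma> * min (\<rho>/2) (e'/M)"] conjI ballI impI)
    show "0 < \<sigma> * min (\<rho>/2) (e'/M)" using \<sigma> \<rho> e' M by simp
    fix p' assume p'K: "p' \<in> K" and np: "norm (p' - (y0 + \<sigma> *\<^sub>R u)) < \<sigma> * min (\<rho>/2) (e'/M)"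
    define u' where "u' = u + (p' - p) /\<^sub>R \<sigma>"
    have p'eq: "y0 + \<sigma> *\<^sub>R u' = p'" unfolding u'_def p_def using \<sigma> by (simp add: algebra_simps)
    have nu: "norm (u' - u) = norm (p' - p) / \<sigma>" unfolding u'_def using \<sigma> by (simp add: divide_inverse_commute)
    have nu2: "norm (u' - u) < min (\<rho>/2) (e'/M)" unfolding nu using np \<sigma> unfolding p_def
      by (metis mult.commute pos_divide_less_eq)
    have "norm (u' - z) \<le> norm (u' - u) + norm (u - z)"
      using norm_triangle_ineq[of "u' - u" "u - z"] by simp
    also have "\<dots> \<le> \<rho>" using nu2 uz by simp
    finally have "- (\<xi> \<bullet> u) + M * (norm (u - z))\<^sup>2 \<le> - (\<xi> \<bullet> u') + M * (norm (u' - z))\<^sup>2"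
      using mn p'eq p'K by simp
    moreover have "(norm (u' - z))\<^sup>2 = (norm (u - z))\<^sup>2 + 2 * ((u - z) \<bullet> (u' - u)) + (norm (u' - u))\<^sup>2"
      using norm_add_sq[of "u - z" "u' - u"] by simp
    ultimately have k1: "ls \<bullet> (u' - u) \<le> M * (norm (u' - u))\<^sup>2"
      unfolding ls_def by (simp add: inner_diff_left inner_diff_right algebra_simps)
    have "p' - p = \<sigma> *\<^sub>R (u' - u)" unfolding u'_def using \<sigma> by simp
    then have "ls \<bullet> (p' - p) = \<sigma> * (ls \<bullet> (u' - u))" by simp
    also have "\<dots> \<le> \<sigma> * (M * (norm (u' - u))\<^sup>2)" using k1 \<sigma> by (simp add: mult_left_mono)
    also have "\<dots> = M * norm (u' - u) * norm (p' - p)" unfolding nu using \<sigma> by (simp add: power2_eq_square)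
    also have "\<dots> \<le> M * (e'/M) * norm (p' - p)"
      using nu2 M by (intro mult_right_mono mult_left_mono) auto
    also have "\<dots> = e' * norm (p' - p)" using M by simp
    finally show "(\<xi> - (2*M) *\<^sub>R (u - z)) \<bullet> (p' - (y0 + \<sigma> *\<^sub>R u)) \<le> e' * norm (p' - (y0 + \<sigma> *\<^sub>R u))"
      unfolding ls_def p_def .
  qed
qed

lemma rnc_U_dnc:
  fixes K :: "'b::euclidean_space set"
  assumes Kc: "closed K" and xi: "\<xi> \<in> regular_normal_cone (U c K y v) z"
  shows "\<xi> \<in> directional_normal_cone K y v"
proof (rule dnc_intro, intro allI impI)
  fix e :: real assume e: "e > 0"
  from xi have zU: "z \<in> U c K y v" and xiR: "\<forall>\<epsilon>>0. \<exists>\<delta>>0. \<forall>u\<in>U c K y v. norm (u - z) < \<delta> \<longrightarrow> \<xi> \<bullet> (u - z) \<le> \<epsilon> * norm (u - z)"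
    unfolding regular_normal_cone_def by auto
  define \<epsilon> where "\<epsilon> = e/8"
  have \<epsilon>: "\<epsilon> > 0" unfolding \<epsilon>_def using e by simp
  obtain \<delta>0 where \<delta>0: "\<delta>0 > 0" "\<forall>u\<in>U c K y v. norm (u - z) < \<delta>0 \<longrightarrow> \<xi> \<bullet> (u - z) \<le> \<epsilon> * norm (u - z)"
    using xiR \<epsilon> by blast
  define \<rho> where "\<rho> = \<delta>0/2"
  have \<rho>: "\<rho> > 0" unfolding \<rho>_def using \<delta>0 by simp
  define M where "M = 1 + 4*\<epsilon>/\<rho>"
  have M: "M > 0" unfolding M_def using \<epsilon> \<rho> by (simp add: add_pos_nonneg)
  have \<epsilon>M: "\<epsilon>/M < \<rho>/4"
  proof -
    have "4 * \<epsilon> < \<rho> * M" unfolding M_def using \<rho> by (simp add: algebra_simps)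
    then show ?thesis using M by (simp add: divide_less_eq field_simps)
  qed
  obtain t r zz where h: "\<forall>k. t k > 0 \<and> r k > 0" "t \<longlonglongrightarrow> 0" "r \<longlonglongrightarrow> 0"
      "(\<lambda>k. t k / r k) \<longlonglongrightarrow> c" "zz \<longlonglongrightarrow> z"
      "\<forall>k. y + t k *\<^sub>R v + ((1/2) * t k * r k) *\<^sub>R zz k \<in> K"
    using zU unfolding U_def by blast
  define \<sigma> where "\<sigma> k = (1/2) * t k * r k" for k
  have \<sigma>pos: "\<sigma> k > 0" for k using h(1) unfolding \<sigma>_def by simp
  define \<psi> where "\<psi> u = - (\<xi> \<bullet> u) + M * (norm (u - z))\<^sup>2" for u
  define D where "D k = {u. y + t k *\<^sub>R v + \<sigma> k *\<^sub>R u \<in> K} \<inter> cball z \<rho>" for k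
  have Dcomp: "compact (D k)" for k
  proof -
    have "closed ((\<lambda>u. y + t k *\<^sub>R v + \<sigma> k *\<^sub>R u) -` K)"
      by (rule closed_vimage[OF Kc]) (intro continuous_intros)
    then have "compact (cball z \<rho> \<inter> {u. y + t k *\<^sub>R v + \<sigma> k *\<^sub>R u \<in> K})"
      by (intro compact_Int_closed compact_cball) (simp add: vimage_def)
    then show ?thesis unfolding D_def by (simp add: Int_commute)
  qed
  have cont\<psi>: "continuous_on A \<psi>" for A unfolding \<psi>_def by (intro continuous_intros)
  obtain N0 where N0: "\<forall>k\<ge>N0. norm (zz k - z) < \<rho>"
    using h(5) \<rho> unfolding LIMSEQ_iff by blast
  have zzD: "zz k \<in> D k" if "k \<ge> N0" for k
    using N0 that h(6) unfolding D_def \<sigma>_def by (simp add: dist_norm norm_minus_commute less_imp_le)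
  have ex: "\<forall>k. \<exists>u. N0 \<le> k \<longrightarrow> u \<in> D k \<and> (\<forall>u'\<in>D k. \<psi> u \<le> \<psi> u')"
  proof
    fix k show "\<exists>u. N0 \<le> k \<longrightarrow> u \<in> D k \<and> (\<forall>u'\<in>D k. \<psi> u \<le> \<psi> u')"
    proof (cases "N0 \<le> k")
      case True
      then have "D k \<noteq> {}" using zzD by blast
      then show ?thesis using continuous_attains_inf[OF Dcomp _ cont\<psi>] by blast
    qed simp
  qed
  obtain uu where uu: "\<And>k. N0 \<le> k \<Longrightarrow> uu k \<in> D k \<and> (\<forall>u'\<in>D k. \<psi> (uu k) \<le> \<psi> u')"
    using choice[OF ex] by blast
  define q where "q k = uu (k + N0)" for k
  have "norm (q k) \<le> norm z + \<rho>" for k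
  proof -
    have "q k \<in> cball z \<rho>" using uu[of "k + N0"] unfolding q_def D_def by simp
    then have "norm (q k - z) \<le> \<rho>" by (simp add: dist_norm norm_minus_commute)
    then show ?thesis using norm_triangle_ineq2[of "q k" z] by simp
  qed
  then have "bounded (range q)" unfolding bounded_iff by blast
  then obtain us \<phi> where \<phi>: "strict_mono \<phi>" "(q \<circ> \<phi>) \<longlonglongrightarrow> us"
    using bounded_imp_convergent_subsequence by blast
  define ch where "ch k = \<phi> k + N0" for k
  have ch: "strict_mono ch" unfolding ch_def using \<phi>(1) by (simp add: strict_mono_def)
  have chN: "N0 \<le> ch k" for k unfolding ch_def by simp
  have ulim: "(\<lambda>k. uu (ch k)) \<longlonglongrightarrow> us" using \<phi>(2) unfolding q_def ch_def by (simp add: comp_def)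
  have uD: "uu (ch k) \<in> D (ch k)" for k using uu[OF chN] by blast
  have usU: "us \<in> U c K y v" unfolding U_def
  proof (intro CollectI exI conjI)
    show "\<forall>k. (t \<circ> ch) k > 0 \<and> (r \<circ> ch) k > 0" using h(1) by simp
    show "(t \<circ> ch) \<longlonglongrightarrow> 0" by (rule LIMSEQ_subseq_LIMSEQ[OF h(2) ch])
    show "(r \<circ> ch) \<longlonglongrightarrow> 0" by (rule LIMSEQ_subseq_LIMSEQ[OF h(3) ch])
    show "(\<lambda>k. (t \<circ> ch) k / (r \<circ> ch) k) \<longlonglongrightarrow> c"
      using LIMSEQ_subseq_LIMSEQ[OF h(4) ch] by (simp add: comp_def)
    show "(\<lambda>k. uu (ch k)) \<longlonglongrightarrow> us" by (rule ulim)
    show "\<forall>k. y + (t \<circ> ch) k *\<^sub>R v + ((1/2) * (t \<circ> ch) k * (r \<circ> ch) k) *\<^sub>R uu (ch k) \<in> K"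
      using uD unfolding D_def \<sigma>_def by simp
  qed
  have usz: "norm (us - z) \<le> \<rho>"
  proof (rule LIMSEQ_le_const2)
    show "(\<lambda>k. norm (uu (ch k) - z)) \<longlonglongrightarrow> norm (us - z)" by (intro tendsto_intros ulim)
    show "\<exists>N. \<forall>n\<ge>N. norm (uu (ch n) - z) \<le> \<rho>"
      using uD unfolding D_def by (auto simp: dist_norm norm_minus_commute)
  qed
  have "\<psi> us \<le> \<psi> z"
  proof (rule LIMSEQ_le)
    show "(\<lambda>k. \<psi> (uu (ch k))) \<longlonglongrightarrow> \<psi> us" unfolding \<psi>_def by (intro tendsto_intros ulim)
    show "(\<lambda>k. \<psi> (zz (ch k))) \<longlonglongrightarrow> \<psi> z"
      unfolding \<psi>_def by (intro tendsto_intros LIMSEQ_subseq_LIMSEQ[OF h(5) ch, unfolded comp_def])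
    show "\<exists>N. \<forall>n\<ge>N. \<psi> (uu (ch n)) \<le> \<psi> (zz (ch n))"
      using uu[OF chN] zzD[OF chN] by blast
  qed
  then have "M * (norm (us - z))\<^sup>2 \<le> \<xi> \<bullet> (us - z)" unfolding \<psi>_def by (simp add: inner_diff_right)
  also have "\<dots> \<le> \<epsilon> * norm (us - z)" using \<delta>0(2) usU usz \<rho>_def \<delta>0(1) by auto
  finally have sq: "M * (norm (us - z))\<^sup>2 \<le> \<epsilon> * norm (us - z)" .
  have usz2: "norm (us - z) \<le> \<epsilon>/M"
  proof (cases "norm (us - z) = 0")
    case False
    then have "M * norm (us - z) \<le> \<epsilon>" using sq by (simp add: power2_eq_square)
    then show ?thesis using M by (simp add: field_simps)
  qed (use \<epsilon> M in simp)
  have E1: "eventually (\<lambda>k. dist (uu (ch k)) us < \<epsilon>/M) sequentially"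
    using ulim[unfolded tendsto_iff, rule_format, of "\<epsilon>/M"] \<epsilon> M by simp
  have E2: "eventually (\<lambda>k. t (ch k) < e) sequentially"
    using order_tendstoD(2)[OF LIMSEQ_subseq_LIMSEQ[OF h(2) ch, unfolded comp_def] e] .
  have "(\<lambda>k. (r (ch k) / 2) *\<^sub>R uu (ch k)) \<longlonglongrightarrow> (0/2) *\<^sub>R us"
    by (intro tendsto_intros ulim LIMSEQ_subseq_LIMSEQ[OF h(3) ch, unfolded comp_def]) simp
  then have "eventually (\<lambda>k. dist ((r (ch k) / 2) *\<^sub>R uu (ch k)) 0 < e) sequentially"
    using e unfolding tendsto_iff by simp
  then have E3: "eventually (\<lambda>k. norm ((r (ch k) / 2) *\<^sub>R uu (ch k)) < e) sequentially"
    unfolding dist_norm diff_zero .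
  from E1 E2 E3 have "eventually (\<lambda>k. dist (uu (ch k)) us < \<epsilon>/M \<and> t (ch k) < e
      \<and> norm ((r (ch k) / 2) *\<^sub>R uu (ch k)) < e) sequentially" by eventually_elim simp
  then obtain k where k: "dist (uu (ch k)) us < \<epsilon>/M" "t (ch k) < e" "norm ((r (ch k) / 2) *\<^sub>R uu (ch k)) < e"
    using eventually_happens'[OF trivial_limit_sequentially] by blast
  define K' where "K' = ch k"
  define u where "u = uu K'"
  have uz: "norm (u - z) < 2 * \<epsilon> / M"
  proof -
    have "norm (u - z) \<le> norm (u - us) + norm (us - z)" using norm_triangle_ineq[of "u - us" "us - z"] by simp
    also have "\<dots> < \<epsilon>/M + \<epsilon>/M" using k(1) usz2 unfolding u_def K'_def dist_norm by simp
    finally show ?thesis by simp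
  qed
  have uz2: "norm (u - z) < \<rho>/2"
  proof -
    have "2 * \<epsilon> / M = 2 * (\<epsilon> / M)" by simp
    then show ?thesis using uz \<epsilon>M by linarith
  qed
  have uDK: "u \<in> D K'" unfolding u_def K'_def using uD by simp
  have pt: "y + t K' *\<^sub>R (v + (r K' / 2) *\<^sub>R u) = (y + t K' *\<^sub>R v) + \<sigma> K' *\<^sub>R u"
    unfolding \<sigma>_def by (simp add: algebra_simps)
  have reg: "\<xi> - (2*M) *\<^sub>R (u - z) \<in> regular_normal_cone K ((y + t K' *\<^sub>R v) + \<sigma> K' *\<^sub>R u)"
  proof (rule fermat_scaled[OF \<sigma>pos M \<rho> uz2])
    show "y + t K' *\<^sub>R v + \<sigma> K' *\<^sub>R u \<in> K" using uDK unfolding D_def by simp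
    show "\<forall>u'. y + t K' *\<^sub>R v + \<sigma> K' *\<^sub>R u' \<in> K \<longrightarrow> norm (u' - z) \<le> \<rho> \<longrightarrow>
       - (\<xi> \<bullet> u) + M * (norm (u - z))\<^sup>2 \<le> - (\<xi> \<bullet> u') + M * (norm (u' - z))\<^sup>2"
    proof (intro allI impI)
      fix u' assume "y + t K' *\<^sub>R v + \<sigma> K' *\<^sub>R u' \<in> K" "norm (u' - z) \<le> \<rho>"
      then have "u' \<in> D K'" unfolding D_def by (simp add: dist_norm norm_minus_commute)
      then have "\<psi> u \<le> \<psi> u'" using uu[OF chN[of k]] unfolding u_def K'_def by blast
      then show "- (\<xi> \<bullet> u) + M * (norm (u - z))\<^sup>2 \<le> - (\<xi> \<bullet> u') + M * (norm (u' - z))\<^sup>2"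
        unfolding \<psi>_def .
    qed
  qed
  have "norm ((\<xi> - (2*M) *\<^sub>R (u - z)) - \<xi>) = 2 * M * norm (u - z)" using M by simp
  also have "\<dots> < 2 * M * (2 * \<epsilon> / M)" using uz M by (intro mult_strict_left_mono) auto
  also have "\<dots> < e" unfolding \<epsilon>_def using M e by simp
  finally have ls: "norm ((\<xi> - (2*M) *\<^sub>R (u - z)) - \<xi>) < e" .
  show "\<exists>t vs ls. t > 0 \<and> t < e \<and> norm (vs - v) < e \<and> norm (ls - \<xi>) < e
      \<and> ls \<in> regular_normal_cone K (y + t *\<^sub>R vs)"
  proof (intro exI conjI)
    show "t K' > 0" using h(1) by simp
    show "t K' < e" using k(2) unfolding K'_def .
    show "norm ((v + (r K' / 2) *\<^sub>R u) - v) < e" using k(3) unfolding u_def K'_def by simp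
    show "norm ((\<xi> - (2*M) *\<^sub>R (u - z)) - \<xi>) < e" by (rule ls)
    show "\<xi> - (2*M) *\<^sub>R (u - z) \<in> regular_normal_cone K (y + t K' *\<^sub>R (v + (r K' / 2) *\<^sub>R u))"
      unfolding pt by (rule reg)
  qed
qed

lemma lnc_U_dnc:
  fixes K :: "'b::euclidean_space set"
  assumes Kc: "closed K" and l: "l \<in> limiting_normal_cone (U c K y v) p"
  shows "l \<in> directional_normal_cone K y v"
proof -
  obtain ys ls where h: "ys \<longlonglongrightarrow> p" "ls \<longlonglongrightarrow> l" "\<forall>k. ys k \<in> U c K y v \<and> ls k \<in> regular_normal_cone (U c K y v) (ys k)"
    using l unfolding limiting_normal_cone_def by blast
  have "\<forall>k. ls k \<in> directional_normal_cone K y v" using h(3) rnc_U_dnc[OF Kc] by blast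
  then show ?thesis using dnc_closed h(2) by blast
qed

lemma lnc_approx:
  fixes T :: "'b::euclidean_space set" and A :: "'a::real_normed_vector \<Rightarrow> 'b" and a :: "'a \<Rightarrow> real"
  assumes h: "\<forall>\<eta>>0. \<exists>z\<in>T. norm (z - p) < \<eta> \<and> (\<exists>l\<in>regular_normal_cone T z. norm l \<le> M
      \<and> (\<forall>u. \<bar>a u + l \<bullet> A u\<bar> \<le> (c0 + \<eta>) * norm u))"
  shows "\<exists>l\<in>limiting_normal_cone T p. norm l \<le> M \<and> (\<forall>u. \<bar>a u + l \<bullet> A u\<bar> \<le> c0 * norm u)"
proof -
  have ex: "\<forall>n. \<exists>z l (dummy::nat). z \<in> T \<and> norm (z - p) < inverse (real (Suc n)) \<and> l \<in> regular_normal_cone T z \<and> norm l \<le> M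
      \<and> (\<forall>u. \<bar>a u + l \<bullet> A u\<bar> \<le> (c0 + inverse (real (Suc n))) * norm u)"
  proof
    fix n
    have "inverse (real (Suc n)) > 0" by simp
    then show "\<exists>z l (dummy::nat). z \<in> T \<and> norm (z - p) < inverse (real (Suc n)) \<and> l \<in> regular_normal_cone T z \<and> norm l \<le> M
      \<and> (\<forall>u. \<bar>a u + l \<bullet> A u\<bar> \<le> (c0 + inverse (real (Suc n))) * norm u)"
      using h by blast
  qed
  obtain Z L DD where H: "\<forall>n. Z n \<in> T \<and> norm (Z n - p) < inverse (real (Suc n)) \<and> L n \<in> regular_normal_cone T (Z n) \<and> norm (L n) \<le> M
      \<and> (\<forall>u. \<bar>a u + L n \<bullet> A u\<bar> \<le> (c0 + inverse (real (Suc n))) * norm u)"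
    using choice3[OF ex] by blast
  have "bounded (range L)" unfolding bounded_iff using H by blast
  then obtain l \<phi> where \<phi>: "strict_mono \<phi>" "(L \<circ> \<phi>) \<longlonglongrightarrow> l"
    using bounded_imp_convergent_subsequence by blast
  have inv\<phi>: "(\<lambda>n. inverse (real (Suc (\<phi> n)))) \<longlonglongrightarrow> 0"
    using LIMSEQ_subseq_LIMSEQ[OF LIMSEQ_inverse_real_of_nat \<phi>(1)] by (simp add: comp_def)
  have Zlim: "(\<lambda>n. Z (\<phi> n)) \<longlonglongrightarrow> p"
  proof (rule LIM_zero_cancel, rule Lim_null_comparison[OF _ inv\<phi>])
    show "\<forall>\<^sub>F n in sequentially. norm (Z (\<phi> n) - p) \<le> inverse (real (Suc (\<phi> n)))"
    proof (intro always_eventually allI)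
      fix n show "norm (Z (\<phi> n) - p) \<le> inverse (real (Suc (\<phi> n)))"
        using H[rule_format, of "\<phi> n"] by (simp add: less_imp_le)
    qed
  qed
  have Llim: "(\<lambda>n. L (\<phi> n)) \<longlonglongrightarrow> l" using \<phi>(2) by (simp add: comp_def)
  have "l \<in> limiting_normal_cone T p"
    unfolding limiting_normal_cone_def using Zlim Llim H by blast
  moreover have "norm l \<le> M"
    by (rule LIMSEQ_le_const2[OF tendsto_norm[OF Llim]]) (use H in blast)
  moreover have "\<bar>a u + l \<bullet> A u\<bar> \<le> (c0 + 0) * norm u" for u
  proof (rule LIMSEQ_le)
    show "(\<lambda>n. \<bar>a u + L (\<phi> n) \<bullet> A u\<bar>) \<longlonglongrightarrow> \<bar>a u + l \<bullet> A u\<bar>" by (intro tendsto_intros Llim)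
    show "(\<lambda>n. (c0 + inverse (real (Suc (\<phi> n)))) * norm u) \<longlonglongrightarrow> (c0 + 0) * norm u"
      by (intro tendsto_intros inv\<phi>)
    show "\<exists>N. \<forall>n\<ge>N. \<bar>a u + L (\<phi> n) \<bullet> A u\<bar> \<le> (c0 + inverse (real (Suc (\<phi> n)))) * norm u"
      using H by blast
  qed
  ultimately show ?thesis by auto
qed

lemma lin_quad:
  fixes G Q :: real
  assumes s0: "s0 > 0" and h: "\<forall>s. 0 < s \<and> s < s0 \<longrightarrow> 0 \<le> s * G + s\<^sup>2 * Q"
  shows "G \<ge> 0"
proof (rule ccontr)
  assume "\<not> G \<ge> 0"
  then have G: "G < 0" by simp
  define s where "s = min (s0/2) (- G / (2 * (\<bar>Q\<bar> + 1)))"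
  have gq: "- G / (2 * (\<bar>Q\<bar> + 1)) > 0" using G by (intro divide_pos_pos) auto
  have s: "0 < s" "s < s0" unfolding s_def using s0 gq by auto
  have "s * \<bar>Q\<bar> \<le> (- G / (2 * (\<bar>Q\<bar> + 1))) * \<bar>Q\<bar>" unfolding s_def by (intro mult_right_mono) auto
  also have "\<dots> \<le> - G / 2"
  proof -
    have "(- G / (2 * (\<bar>Q\<bar> + 1))) * \<bar>Q\<bar> = (-G/2) * (\<bar>Q\<bar> / (\<bar>Q\<bar> + 1))" by (simp add: field_simps)
    also have "\<dots> \<le> (-G/2) * 1" using G by (intro mult_left_mono) auto
    finally show ?thesis by simp
  qed
  finally have "s * \<bar>Q\<bar> \<le> - G / 2" .
  moreover have "s * Q \<le> s * \<bar>Q\<bar>" using s(1) by (intro mult_left_mono) auto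
  ultimately have "G + s * Q < 0" using G by linarith
  then have "s * (G + s * Q) < 0" using s(1) by (simp add: mult_pos_neg)
  moreover have "0 \<le> s * G + s\<^sup>2 * Q" using h s by blast
  ultimately show False by (simp add: power2_eq_square algebra_simps)
qed

lemma theta_choice:
  fixes c1 c2 \<zeta> :: real
  assumes "c1 \<ge> 0" "c2 \<ge> 0" "\<zeta> > 0"
  shows "\<exists>\<theta>>0. \<forall>D. 0 \<le> D \<and> D \<le> \<theta> \<longrightarrow> c1 * D + sqrt (c2 * D) \<le> \<zeta> \<and> D \<le> \<zeta>"
proof (intro exI[of _ "min \<zeta> (min (\<zeta> / (2*c1+1)) (\<zeta>\<^sup>2 / (4*c2+1)))"] conjI allI impI)
  show "0 < min \<zeta> (min (\<zeta> / (2*c1+1)) (\<zeta>\<^sup>2 / (4*c2+1)))" using assms by simp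
  fix D assume D: "0 \<le> D \<and> D \<le> min \<zeta> (min (\<zeta> / (2*c1+1)) (\<zeta>\<^sup>2 / (4*c2+1)))"
  show "D \<le> \<zeta>" using D by simp
  have a: "c1 * D \<le> \<zeta>/2"
  proof -
    have "c1 * D \<le> c1 * (\<zeta> / (2*c1+1))" using D assms by (intro mult_left_mono) auto
    also have "\<dots> \<le> \<zeta>/2" using assms by (simp add: field_simps)
    finally show ?thesis .
  qed
  have b: "sqrt (c2 * D) \<le> \<zeta>/2"
  proof -
    have "c2 * D \<le> c2 * (\<zeta>\<^sup>2 / (4*c2+1))" using D assms by (intro mult_left_mono) auto
    also have "\<dots> \<le> (\<zeta>/2)\<^sup>2" using assms by (simp add: field_simps power2_eq_square)
    finally show ?thesis using assms by (intro real_le_lsqrt) auto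
  qed
  show "c1 * D + sqrt (c2 * D) \<le> \<zeta>" using a b by simp
qed

lemma sqdiff_le:
  fixes p q :: "'a::real_normed_vector"
  shows "\<bar>(norm p)\<^sup>2 - (norm q)\<^sup>2\<bar> \<le> norm (p - q) * (norm p + norm q)"
proof -
  have e1: "(norm p)\<^sup>2 - (norm q)\<^sup>2 = (norm p - norm q) * (norm p + norm q)"
    by (simp add: power2_eq_square algebra_simps)
  have "\<bar>(norm p)\<^sup>2 - (norm q)\<^sup>2\<bar> = \<bar>norm p - norm q\<bar> * (norm p + norm q)"
    unfolding e1 abs_mult by simp
  also have "\<dots> \<le> norm (p - q) * (norm p + norm q)"
    by (intro mult_right_mono norm_triangle_ineq3) simp
  finally show ?thesis .
qed

lemma blin_le:
  fixes a :: "'a::real_normed_vector \<Rightarrow>\<^sub>L real"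
  shows "a x \<le> norm a * norm x"
  using norm_blinfun[of a x] by simp

lemma core_min:
  fixes W :: "'a::euclidean_space set" and a :: "'a \<Rightarrow>\<^sub>L real"
  assumes Wc: "closed W" and w0: "w0 \<in> W" and \<epsilon>: "\<epsilon> > 0"
  shows "\<exists>wt\<in>W. \<forall>w\<in>W. a wt + \<epsilon> * (norm (wt - w0))\<^sup>2 \<le> a w + \<epsilon> * (norm (w - w0))\<^sup>2"
proof -
  define R where "R = norm a / \<epsilon> + 1"
  define \<Phi> where "\<Phi> w = a w + \<epsilon> * (norm (w - w0))\<^sup>2" for w
  have Sc: "compact (cball w0 R \<inter> W)" by (intro compact_Int_closed compact_cball Wc)
  have "R \<ge> 0" unfolding R_def using \<epsilon> by simp
  then have Sne: "cball w0 R \<inter> W \<noteq> {}" using w0 by (metis IntI centre_in_cball empty_iff)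
  have cont: "continuous_on (cball w0 R \<inter> W) \<Phi>" unfolding \<Phi>_def by (intro continuous_intros)
  obtain wt where wt: "wt \<in> cball w0 R \<inter> W" "\<forall>y\<in>cball w0 R \<inter> W. \<Phi> wt \<le> \<Phi> y"
    using continuous_attains_inf[OF Sc Sne cont] by blast
  have "\<Phi> wt \<le> \<Phi> w" if wW: "w \<in> W" for w
  proof (cases "w \<in> cball w0 R")
    case True then show ?thesis using wt wW by blast
  next
    case False
    then have big: "norm (w - w0) > R" by (simp add: dist_norm norm_minus_commute)
    have "\<Phi> wt \<le> \<Phi> w0" using wt w0 \<epsilon> by (simp add: R_def)
    also have "\<Phi> w0 = a w0" unfolding \<Phi>_def by simp
    also have "a w0 \<le> a w + \<epsilon> * (norm (w - w0))\<^sup>2"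
    proof -
      have "a (w0 - w) \<le> norm a * norm (w - w0)" using blin_le[of a "w0 - w"] by (simp add: norm_minus_commute)
      also have "\<dots> \<le> (\<epsilon> * norm (w - w0)) * norm (w - w0)"
      proof (rule mult_right_mono)
        have "norm a < \<epsilon> * R" unfolding R_def using \<epsilon> by (simp add: field_simps)
        also have "\<dots> < \<epsilon> * norm (w - w0)" using big \<epsilon> by simp
        finally show "norm a \<le> \<epsilon> * norm (w - w0)" by simp
      qed simp
      finally show ?thesis by (simp add: blinfun.diff_right power2_eq_square algebra_simps)
    qed
    finally show ?thesis unfolding \<Phi>_def by simp
  qed
  then show ?thesis using wt unfolding \<Phi>_def by blast
qed

lemma Phi_lip:
  fixes a :: "'a::real_normed_vector \<Rightarrow>\<^sub>L real"
  assumes \<epsilon>: "\<epsilon> > 0" and w1: "norm (w1 - wt) \<le> 2" and w2: "norm (w2 - wt) \<le> 2"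
  shows "(a w1 + \<epsilon> * (norm (w1 - w0))\<^sup>2 + \<epsilon> * (norm (w1 - wt))\<^sup>2)
       - (a w2 + \<epsilon> * (norm (w2 - w0))\<^sup>2 + \<epsilon> * (norm (w2 - wt))\<^sup>2)
       \<le> (norm a + 2 * \<epsilon> * norm (wt - w0) + 8 * \<epsilon>) * norm (w1 - w2)"
proof -
  have A: "a w1 - a w2 \<le> norm a * norm (w1 - w2)"
    using blin_le[of a "w1 - w2"] by (simp add: blinfun.diff_right)
  have n1: "norm (w1 - w0) \<le> 2 + norm (wt - w0)"
    using norm_triangle_ineq[of "w1 - wt" "wt - w0"] w1 by simp
  have n2: "norm (w2 - w0) \<le> 2 + norm (wt - w0)"
    using norm_triangle_ineq[of "w2 - wt" "wt - w0"] w2 by simp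
  have B: "(norm (w1 - w0))\<^sup>2 - (norm (w2 - w0))\<^sup>2 \<le> norm (w1 - w2) * (4 + 2 * norm (wt - w0))"
  proof -
    have "(norm (w1 - w0))\<^sup>2 - (norm (w2 - w0))\<^sup>2 \<le> norm (w1 - w2) * (norm (w1 - w0) + norm (w2 - w0))"
      using sqdiff_le[of "w1 - w0" "w2 - w0"] by simp
    also have "\<dots> \<le> norm (w1 - w2) * (4 + 2 * norm (wt - w0))"
      using n1 n2 by (intro mult_left_mono) auto
    finally show ?thesis .
  qed
  have C: "(norm (w1 - wt))\<^sup>2 - (norm (w2 - wt))\<^sup>2 \<le> norm (w1 - w2) * 4"
  proof -
    have "(norm (w1 - wt))\<^sup>2 - (norm (w2 - wt))\<^sup>2 \<le> norm (w1 - w2) * (norm (w1 - wt) + norm (w2 - wt))"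
      using sqdiff_le[of "w1 - wt" "w2 - wt"] by simp
    also have "\<dots> \<le> norm (w1 - w2) * 4"
      using w1 w2 by (intro mult_left_mono) auto
    finally show ?thesis .
  qed
  have "\<epsilon> * ((norm (w1 - w0))\<^sup>2 - (norm (w2 - w0))\<^sup>2) \<le> \<epsilon> * (norm (w1 - w2) * (4 + 2 * norm (wt - w0)))"
    using B \<epsilon> by (intro mult_left_mono) auto
  moreover have "\<epsilon> * ((norm (w1 - wt))\<^sup>2 - (norm (w2 - wt))\<^sup>2) \<le> \<epsilon> * (norm (w1 - w2) * 4)"
    using C \<epsilon> by (intro mult_left_mono) auto
  ultimately show ?thesis using A by (simp add: algebra_simps)
qed

lemma core_pen:
  fixes W :: "'a::euclidean_space set" and T :: "'b::euclidean_space set"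
    and A :: "'a \<Rightarrow>\<^sub>L 'b" and a :: "'a \<Rightarrow>\<^sub>L real"
  assumes Tc: "closed T" and wtW: "wt \<in> W" and WT: "\<forall>w\<in>W. A w + e \<in> T"
    and reg: "\<forall>w z. z \<in> T \<longrightarrow> (\<exists>w'\<in>W. norm (w' - w) \<le> \<kappa> * norm (A w + e - z))"
    and \<kappa>: "\<kappa> > 0" and \<epsilon>: "\<epsilon> > 0"
    and wmin: "\<forall>w\<in>W. a wt + \<epsilon> * (norm (wt - w0))\<^sup>2 \<le> a w + \<epsilon> * (norm (w - w0))\<^sup>2"
    and \<eta>: "\<eta> > 0"
  shows "\<exists>z\<in>T. norm (z - (A wt + e)) < \<eta> \<and> (\<exists>l\<in>regular_normal_cone T z.
      norm l \<le> 2 * (norm a + 2 * \<epsilon> * norm (wt - w0) + 8 * \<epsilon>) * (\<kappa> + 1)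
      \<and> (\<forall>u. \<bar>a u + l \<bullet> A u\<bar> \<le> (2 * \<epsilon> * norm (wt - w0) + \<eta>) * norm u))"
proof -
  define Lip where "Lip = norm a + 2 * \<epsilon> * norm (wt - w0) + 8 * \<epsilon>"
  have Lip: "Lip > 0" unfolding Lip_def using \<epsilon> by (simp add: add_nonneg_pos)
  define \<Phi> where "\<Phi> w = a w + \<epsilon> * (norm (w - w0))\<^sup>2 + \<epsilon> * (norm (w - wt))\<^sup>2" for w
  have lip: "\<Phi> w1 - \<Phi> w2 \<le> Lip * norm (w1 - w2)" if "norm (w1 - wt) \<le> 2" "norm (w2 - wt) \<le> 2" for w1 w2
    unfolding \<Phi>_def Lip_def using Phi_lip[OF \<epsilon> that, of a w0] by simp
  have \<Phi>min: "\<Phi> wt + \<epsilon> * (norm (w - wt))\<^sup>2 \<le> \<Phi> w" if "w \<in> W" for w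
    using wmin that unfolding \<Phi>_def by auto
  define \<zeta> where "\<zeta> = min (1/4) (\<eta>/4) / (norm A + 4 * \<epsilon> + \<kappa> + 1)"
  have den: "norm A + 4 * \<epsilon> + \<kappa> + 1 > 0" using \<epsilon> \<kappa> by (simp add: add_nonneg_pos add_pos_pos)
  have \<zeta>: "\<zeta> > 0" unfolding \<zeta>_def using \<eta> den by simp
  have \<zeta>den: "\<zeta> * (norm A + 4 * \<epsilon> + \<kappa> + 1) = min (1/4) (\<eta>/4)" unfolding \<zeta>_def using den by simp
  have \<zeta>1: "\<zeta> \<le> 1/4"
  proof -
    have "\<zeta> * 1 \<le> \<zeta> * (norm A + 4 * \<epsilon> + \<kappa> + 1)" using \<zeta> \<epsilon> \<kappa> by (intro mult_left_mono) auto
    then show ?thesis using \<zeta>den by simp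
  qed
  have \<zeta>A: "\<zeta> * (1 + norm A) \<le> min (1/4) (\<eta>/4)"
  proof -
    have "\<zeta> * (1 + norm A) \<le> \<zeta> * (norm A + 4 * \<epsilon> + \<kappa> + 1)" using \<zeta> \<epsilon> \<kappa> by (intro mult_left_mono) auto
    then show ?thesis using \<zeta>den by simp
  qed
  have \<zeta>\<epsilon>: "4 * \<epsilon> * \<zeta> \<le> \<eta>/4"
  proof -
    have "\<zeta> * (4 * \<epsilon>) \<le> \<zeta> * (norm A + 4 * \<epsilon> + \<kappa> + 1)" using \<zeta> \<epsilon> \<kappa> by (intro mult_left_mono) auto
    then show ?thesis using \<zeta>den by (simp add: mult_ac)
  qed
  have \<zeta>\<kappa>: "\<kappa> * \<zeta> \<le> 1/4"
  proof -
    have "\<zeta> * \<kappa> \<le> \<zeta> * (norm A + 4 * \<epsilon> + \<kappa> + 1)" using \<zeta> \<epsilon> \<kappa> by (intro mult_left_mono) auto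
    then show ?thesis using \<zeta>den by (simp add: mult_ac)
  qed
  obtain \<theta> where \<theta>: "\<theta> > 0" and h\<theta>: "\<forall>D. 0 \<le> D \<and> D \<le> \<theta> \<longrightarrow> \<kappa> * D + sqrt ((Lip * \<kappa> / \<epsilon>) * D) \<le> \<zeta> \<and> D \<le> \<zeta>"
    using theta_choice[of \<kappa> "Lip * \<kappa> / \<epsilon>" \<zeta>] \<kappa> Lip \<epsilon> \<zeta> by auto
  define j where "j = 2 * Lip / \<theta>\<^sup>2 + 1"
  have j: "j > 0" unfolding j_def using Lip \<theta> by (simp add: add_nonneg_pos)
  define c0 where "c0 = A wt + e"
  have c0T: "c0 \<in> T" unfolding c0_def using WT wtW by blast
  define Dom where "Dom = cball wt 1 \<times> (cball c0 1 \<inter> T)"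
  have Domc: "compact Dom" unfolding Dom_def
    by (intro compact_Times compact_cball compact_Int_closed Tc)
  have Dne: "(wt, c0) \<in> Dom" unfolding Dom_def using c0T by simp
  define F where "F p = \<Phi> (fst p) + (j/2) * (norm (A (fst p) + e - snd p))\<^sup>2" for p
  have Fc: "continuous_on Dom F" unfolding F_def \<Phi>_def by (intro continuous_intros)
  obtain pm where pm: "pm \<in> Dom" "\<forall>p\<in>Dom. F pm \<le> F p"
    using continuous_attains_inf[OF Domc _ Fc] Dne by blast
  define wj where "wj = fst pm"
  define zj where "zj = snd pm"
  have pmeq: "pm = (wj, zj)" unfolding wj_def zj_def by simp
  have wj1: "norm (wj - wt) \<le> 1" and zjc: "norm (zj - c0) \<le> 1" and zjT: "zj \<in> T"
    using pm(1) unfolding Dom_def pmeq by (auto simp: dist_norm norm_minus_commute)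
  define q where "q = A wj + e - zj"
  define D where "D = norm q"
  have Fpm: "F pm = \<Phi> wj + (j/2) * D\<^sup>2" unfolding F_def pmeq D_def q_def by simp
  have "F pm \<le> F (wt, c0)" using pm(2) Dne by blast
  moreover have "F (wt, c0) = \<Phi> wt" by (simp add: F_def c0_def)
  ultimately have F1: "\<Phi> wj + (j/2) * D\<^sup>2 \<le> \<Phi> wt" using Fpm by simp
  have n1: "norm (wt - wj) \<le> 1" using wj1 by (simp add: norm_minus_commute)
  have "\<Phi> wt - \<Phi> wj \<le> Lip * norm (wt - wj)" by (rule lip) (use wj1 in auto)
  also have "\<dots> \<le> Lip" using n1 Lip by (simp add: mult_left_le)
  finally have L1: "\<Phi> wt - \<Phi> wj \<le> Lip" .
  have "j * D\<^sup>2 \<le> 2 * Lip" using F1 L1 by linarith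
  then have D2: "D\<^sup>2 \<le> 2 * Lip / j" using j by (simp add: pos_le_divide_eq mult.commute)
  have "\<theta>\<^sup>2 * j = 2 * Lip + \<theta>\<^sup>2" unfolding j_def using \<theta> by (simp add: field_simps)
  then have "2 * Lip / j \<le> \<theta>\<^sup>2" using j \<theta> by (simp add: pos_divide_le_eq)
  with D2 have "D\<^sup>2 \<le> \<theta>\<^sup>2" by linarith
  then have D\<theta>: "D \<le> \<theta>" by (rule power2_le_imp_le) (use \<theta> in auto)
  have D0: "D \<ge> 0" unfolding D_def by simp
  have Dbd: "\<kappa> * D + sqrt ((Lip * \<kappa> / \<epsilon>) * D) \<le> \<zeta>" "D \<le> \<zeta>" using h\<theta>[rule_format, of D] D0 D\<theta> by blast+
  obtain w' where w'W: "w' \<in> W" and w'j: "norm (w' - wj) \<le> \<kappa> * D"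
    using reg zjT unfolding D_def q_def by blast
  have \<kappa>D: "\<kappa> * D \<le> 1/4"
  proof -
    have "\<kappa> * D \<le> \<kappa> * \<zeta>" using Dbd(2) \<kappa> by (intro mult_left_mono) auto
    then show ?thesis using \<zeta>\<kappa> by simp
  qed
  have w't2: "norm (w' - wt) \<le> 2"
    using norm_triangle_ineq[of "w' - wj" "wj - wt"] w'j wj1 \<kappa>D by simp
  have lipw': "\<Phi> w' - \<Phi> wj \<le> Lip * (\<kappa> * D)"
  proof -
    have "\<Phi> w' - \<Phi> wj \<le> Lip * norm (w' - wj)" using lip[of w' wj] w't2 wj1 by simp
    also have "\<dots> \<le> Lip * (\<kappa> * D)" using w'j Lip by (intro mult_left_mono) auto
    finally show ?thesis .
  qed
  have "\<epsilon> * (norm (w' - wt))\<^sup>2 \<le> \<Phi> w' - \<Phi> wt" using \<Phi>min[OF w'W] by simp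
  also have "\<dots> \<le> Lip * (\<kappa> * D)"
  proof -
    have "(j/2) * D\<^sup>2 \<ge> 0" using j by simp
    then show ?thesis using lipw' F1 by linarith
  qed
  finally have "\<epsilon> * (norm (w' - wt))\<^sup>2 \<le> Lip * (\<kappa> * D)" .
  then have "(norm (w' - wt))\<^sup>2 \<le> (Lip * (\<kappa> * D)) / \<epsilon>" using \<epsilon> by (simp add: pos_le_divide_eq mult.commute)
  then have "(norm (w' - wt))\<^sup>2 \<le> (Lip * \<kappa> / \<epsilon>) * D" by (simp add: mult_ac)
  then have w'wt: "norm (w' - wt) \<le> sqrt ((Lip * \<kappa> / \<epsilon>) * D)" by (rule real_le_rsqrt)
  define s where "s = norm (wj - wt)"
  have s\<zeta>: "s \<le> \<zeta>"
  proof -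
    have "s \<le> norm (wj - w') + norm (w' - wt)" unfolding s_def using norm_triangle_ineq[of "wj - w'" "w' - wt"] by simp
    also have "\<dots> \<le> \<kappa> * D + sqrt ((Lip * \<kappa> / \<epsilon>) * D)" using w'j w'wt by (simp add: norm_minus_commute)
    finally show ?thesis using Dbd(1) by simp
  qed
  have s0: "s \<ge> 0" unfolding s_def by simp
  have w'\<zeta>: "norm (w' - wt) \<le> \<zeta>" using w'wt Dbd(1) \<kappa> D0 by (smt (verit) mult_nonneg_nonneg)
  have Aw: "norm (A x - A y) \<le> norm A * norm (x - y)" for x y
    using norm_blinfun[of A "x - y"] by (simp add: blinfun.diff_right)
  have zjc0: "norm (zj - c0) \<le> min (1/4) (\<eta>/4)"
  proof -
    have "zj - c0 = (A wj - A wt) - q" unfolding q_def c0_def by simp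
    then have "norm (zj - c0) \<le> norm (A wj - A wt) + D" unfolding D_def using norm_triangle_ineq4 by metis
    also have "\<dots> \<le> norm A * s + \<zeta>" using Aw[of wj wt] Dbd(2) unfolding s_def by simp
    also have "\<dots> \<le> norm A * \<zeta> + \<zeta>" using s\<zeta> by (intro add_right_mono mult_left_mono) auto
    also have "\<dots> = \<zeta> * (1 + norm A)" by (simp add: algebra_simps)
    finally show ?thesis using \<zeta>A by simp
  qed
  define l where "l = j *\<^sub>R q"
  have w'Dom: "(w', A w' + e) \<in> Dom"
  proof -
    have "norm (A w' + e - c0) \<le> norm A * \<zeta>"
    proof -
      have "norm (A w' + e - c0) = norm (A w' - A wt)" unfolding c0_def by (simp add: algebra_simps)
      also have "\<dots> \<le> norm A * norm (w' - wt)" by (rule Aw)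
      also have "\<dots> \<le> norm A * \<zeta>" using w'\<zeta> by (intro mult_left_mono) auto
      finally show ?thesis .
    qed
    moreover have "norm A * \<zeta> \<le> 1/4" using \<zeta>A \<zeta> by (simp add: algebra_simps)
    ultimately show ?thesis unfolding Dom_def using WT w'W w'\<zeta> \<zeta>1
      by (auto simp: dist_norm norm_minus_commute)
  qed
  have "F pm \<le> F (w', A w' + e)" using pm(2) w'Dom by blast
  moreover have "F (w', A w' + e) = \<Phi> w'" by (simp add: F_def)
  ultimately have "\<Phi> wj + (j/2) * D\<^sup>2 \<le> \<Phi> w'" using Fpm by simp
  then have jD: "(j/2) * D\<^sup>2 \<le> Lip * (\<kappa> * D)" using lipw' by simp
  have nl: "norm l \<le> 2 * Lip * (\<kappa> + 1)"
  proof (cases "D = 0")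
    case True then show ?thesis unfolding l_def D_def using Lip \<kappa> by simp
  next
    case False
    then have Dp: "D > 0" using D0 by simp
    have "(j/2) * D * D \<le> (Lip * \<kappa>) * D" using jD by (simp add: power2_eq_square mult_ac)
    then have "(j/2) * D \<le> Lip * \<kappa>" using Dp by (simp add: mult_le_cancel_right_pos)
    then have "j * D \<le> 2 * Lip * \<kappa>" by simp
    also have "\<dots> \<le> 2 * Lip * (\<kappa> + 1)" using Lip by simp
    finally show ?thesis unfolding l_def D_def using j by simp
  qed
  have lreg: "l \<in> regular_normal_cone T zj"
    unfolding regular_normal_cone_def
  proof (intro CollectI conjI zjT allI impI)
    fix e' :: real assume e': "e' > 0"
    show "\<exists>\<delta>>0. \<forall>y'\<in>T. norm (y' - zj) < \<delta> \<longrightarrow> l \<bullet> (y' - zj) \<le> e' * norm (y' - zj)"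
    proof (intro exI[of _ "min (1/4) (2 * e' / j)"] conjI ballI impI)
      show "0 < min (1/4) (2 * e' / j)" using e' j by simp
      fix z' assume z'T: "z' \<in> T" and nz: "norm (z' - zj) < min (1/4) (2 * e' / j)"
      have "norm (z' - c0) \<le> norm (z' - zj) + norm (zj - c0)" using norm_triangle_ineq[of "z' - zj" "zj - c0"] by simp
      also have "\<dots> \<le> 1" using nz zjc0 by simp
      finally have "(wj, z') \<in> Dom" unfolding Dom_def using wj1 z'T by (simp add: dist_norm norm_minus_commute)
      then have "F pm \<le> F (wj, z')" using pm(2) by blast
      moreover have "F (wj, z') = \<Phi> wj + (j/2) * (norm (q - (z' - zj)))\<^sup>2"
        unfolding F_def q_def by (simp add: algebra_simps)
      ultimately have "D\<^sup>2 \<le> (norm (q - (z' - zj)))\<^sup>2" using Fpm j by simp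
      also have "(norm (q - (z' - zj)))\<^sup>2 = D\<^sup>2 - 2 * (q \<bullet> (z' - zj)) + (norm (z' - zj))\<^sup>2"
      proof -
        have a1: "q - (z' - zj) = q + (zj - z')" by simp
        have a2: "q \<bullet> (zj - z') = - (q \<bullet> (z' - zj))" by (simp add: inner_diff_right)
        have a3: "norm (zj - z') = norm (z' - zj)" by (rule norm_minus_commute)
        show ?thesis unfolding a1 D_def using norm_add_sq[of q "zj - z'"] a2 a3 by simp
      qed
      finally have "2 * (q \<bullet> (z' - zj)) \<le> (norm (z' - zj))\<^sup>2" by simp
      then have "l \<bullet> (z' - zj) \<le> (j/2) * (norm (z' - zj))\<^sup>2" unfolding l_def using j by simp
      also have "\<dots> = ((j/2) * norm (z' - zj)) * norm (z' - zj)" by (simp add: power2_eq_square)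
      also have "\<dots> \<le> e' * norm (z' - zj)"
      proof (rule mult_right_mono)
        have "norm (z' - zj) < 2 * e' / j" using nz by simp
        then show "(j/2) * norm (z' - zj) \<le> e'" using j by (simp add: field_simps)
      qed simp
      finally show "l \<bullet> (z' - zj) \<le> e' * norm (z' - zj)" .
    qed
  qed
  define G where "G u = a u + 2 * \<epsilon> * ((wj - w0) \<bullet> u) + 2 * \<epsilon> * ((wj - wt) \<bullet> u) + j * (q \<bullet> A u)" for u
  have Gnn: "G u \<ge> 0" for u
  proof (rule lin_quad)
    show "1 / (4 * (norm u + 1)) > 0" by (simp add: add_nonneg_pos)
    show "\<forall>s'. 0 < s' \<and> s' < 1 / (4 * (norm u + 1)) \<longrightarrow>
        0 \<le> s' * G u + s'\<^sup>2 * (2 * \<epsilon> * (norm u)\<^sup>2 + (j/2) * (norm (A u))\<^sup>2)"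
    proof (intro allI impI, elim conjE)
      fix s' :: real assume s'0: "0 < s'" and s'1: "s' < 1 / (4 * (norm u + 1))"
      have "s' * norm u \<le> 1/4"
      proof -
        have "s' * norm u \<le> s' * (norm u + 1)" using s'0 by simp
        also have "\<dots> \<le> 1/4"
        proof -
          have pos4: "4*(norm u+1) > 0" by (simp add: add_nonneg_pos)
          have "s' * (4*(norm u+1)) < 1" using s'1 unfolding pos_less_divide_eq[OF pos4] .
          moreover have "s' * (4*(norm u+1)) = 4 * (s' * (norm u + 1))" by (simp add: mult_ac)
          ultimately show ?thesis by linarith
        qed
        finally show ?thesis .
      qed
      then have "norm (wj + s' *\<^sub>R u - wt) \<le> 1"
        using norm_triangle_ineq[of "wj - wt" "s' *\<^sub>R u"] s\<zeta> \<zeta>1 s'0 unfolding s_def by (simp add: algebra_simps)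
      then have "(wj + s' *\<^sub>R u, zj) \<in> Dom" using pm(1) unfolding Dom_def pmeq by (simp add: dist_norm norm_minus_commute)
      then have le: "F pm \<le> F (wj + s' *\<^sub>R u, zj)" using pm(2) by blast
      have e1: "(norm (wj + s' *\<^sub>R u - w0))\<^sup>2 = (norm (wj - w0))\<^sup>2 + 2 * s' * ((wj - w0) \<bullet> u) + s'\<^sup>2 * (norm u)\<^sup>2"
        using norm_add_sq[of "wj - w0" "s' *\<^sub>R u"] by (simp add: algebra_simps power2_eq_square)
      have e2: "(norm (wj + s' *\<^sub>R u - wt))\<^sup>2 = (norm (wj - wt))\<^sup>2 + 2 * s' * ((wj - wt) \<bullet> u) + s'\<^sup>2 * (norm u)\<^sup>2"
        using norm_add_sq[of "wj - wt" "s' *\<^sub>R u"] by (simp add: algebra_simps power2_eq_square)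
      have e3: "(norm (A (wj + s' *\<^sub>R u) + e - zj))\<^sup>2 = D\<^sup>2 + 2 * s' * (q \<bullet> A u) + s'\<^sup>2 * (norm (A u))\<^sup>2"
        using norm_add_sq[of q "s' *\<^sub>R A u"] unfolding D_def q_def
        by (simp add: blinfun.add_right blinfun.scaleR_right algebra_simps power2_eq_square)
      have "F (wj + s' *\<^sub>R u, zj) - F pm = s' * G u + s'\<^sup>2 * (2 * \<epsilon> * (norm u)\<^sup>2 + (j/2) * (norm (A u))\<^sup>2)"
      proof -
        have FF: "F (wj + s' *\<^sub>R u, zj) = \<Phi> (wj + s' *\<^sub>R u) + (j/2) * (norm (A (wj + s' *\<^sub>R u) + e - zj))\<^sup>2"
          by (simp add: F_def)
        have PP: "\<Phi> (wj + s' *\<^sub>R u) = a wj + s' * a u + \<epsilon> * ((norm (wj - w0))\<^sup>2 + 2 * s' * ((wj - w0) \<bullet> u) + s'\<^sup>2 * (norm u)\<^sup>2)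
            + \<epsilon> * ((norm (wj - wt))\<^sup>2 + 2 * s' * ((wj - wt) \<bullet> u) + s'\<^sup>2 * (norm u)\<^sup>2)"
          unfolding \<Phi>_def e1 e2 by (simp add: blinfun.add_right blinfun.scaleR_right)
        have P0: "\<Phi> wj = a wj + \<epsilon> * (norm (wj - w0))\<^sup>2 + \<epsilon> * (norm (wj - wt))\<^sup>2" by (simp add: \<Phi>_def)
        show ?thesis unfolding FF PP e3 Fpm P0 G_def by (simp add: algebra_simps)
      qed
      then show "0 \<le> s' * G u + s'\<^sup>2 * (2 * \<epsilon> * (norm u)\<^sup>2 + (j/2) * (norm (A u))\<^sup>2)" using le by simp
    qed
  qed
  have G0: "G u = 0" for u
  proof -
    have "G (- u) = - G u" unfolding G_def by (simp add: blinfun.minus_right)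
    then show ?thesis using Gnn[of u] Gnn[of "-u"] by simp
  qed
  have grad: "\<bar>a u + l \<bullet> A u\<bar> \<le> (2 * \<epsilon> * norm (wt - w0) + \<eta>) * norm u" for u
  proof -
    have "a u + l \<bullet> A u = - (2 * \<epsilon>) * (((wj - w0) + (wj - wt)) \<bullet> u)"
      using G0[of u] unfolding G_def l_def by (simp add: inner_add_left algebra_simps)
    then have "\<bar>a u + l \<bullet> A u\<bar> = 2 * \<epsilon> * \<bar>((wj - w0) + (wj - wt)) \<bullet> u\<bar>" using \<epsilon> by (simp add: abs_mult)
    also have "\<dots> \<le> 2 * \<epsilon> * (norm ((wj - w0) + (wj - wt)) * norm u)"
      using \<epsilon> Cauchy_Schwarz_ineq2 by (intro mult_left_mono) auto
    also have "norm ((wj - w0) + (wj - wt)) \<le> norm (wt - w0) + 2 * s"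
    proof -
      have eq: "(wj - w0) + (wj - wt) = (wt - w0) + 2 *\<^sub>R (wj - wt)" by (simp add: scaleR_2 algebra_simps)
      have "norm ((wt - w0) + 2 *\<^sub>R (wj - wt)) \<le> norm (wt - w0) + norm (2 *\<^sub>R (wj - wt))" by (rule norm_triangle_ineq)
      then show ?thesis unfolding s_def eq by simp
    qed
    then have "2 * \<epsilon> * (norm ((wj - w0) + (wj - wt)) * norm u) \<le> 2 * \<epsilon> * ((norm (wt - w0) + 2 * s) * norm u)"
      using \<epsilon> by (intro mult_left_mono mult_right_mono) auto
    also have "\<dots> = (2 * \<epsilon> * norm (wt - w0) + 4 * \<epsilon> * s) * norm u" by (simp add: algebra_simps)
    also have "\<dots> \<le> (2 * \<epsilon> * norm (wt - w0) + \<eta>) * norm u"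
    proof (intro mult_right_mono add_left_mono)
      have "4 * \<epsilon> * s \<le> 4 * \<epsilon> * \<zeta>" using s\<zeta> \<epsilon> by (intro mult_left_mono) auto
      then show "4 * \<epsilon> * s \<le> \<eta>" using \<zeta>\<epsilon> \<eta> by simp
    qed simp
    finally show ?thesis .
  qed
  have "norm (zj - (A wt + e)) < \<eta>" using zjc0 \<eta> unfolding c0_def by simp
  then have nz: "norm (zj - (A wt + e)) < \<eta>" .
  have ex: "\<exists>l\<in>regular_normal_cone T zj. norm l \<le> 2 * (norm a + 2 * \<epsilon> * norm (wt - w0) + 8 * \<epsilon>) * (\<kappa> + 1)
      \<and> (\<forall>u. \<bar>a u + l \<bullet> A u\<bar> \<le> (2 * \<epsilon> * norm (wt - w0) + \<eta>) * norm u)"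
  proof (intro bexI[of _ l] conjI allI)
    show "norm l \<le> 2 * (norm a + 2 * \<epsilon> * norm (wt - w0) + 8 * \<epsilon>) * (\<kappa> + 1)" using nl unfolding Lip_def .
  qed (use lreg grad in auto)
  show ?thesis using nz ex zjT by blast
qed

lemma partA:
  fixes f :: "'a::euclidean_space \<Rightarrow> real" and g :: "'a \<Rightarrow> 'b::euclidean_space"
    and f' :: "'a \<Rightarrow> 'a \<Rightarrow>\<^sub>L real" and f'' :: "'a \<Rightarrow> 'a \<Rightarrow>\<^sub>L ('a \<Rightarrow>\<^sub>L real)"
    and g' :: "'a \<Rightarrow> 'a \<Rightarrow>\<^sub>L 'b" and g'' :: "'a \<Rightarrow> 'a \<Rightarrow>\<^sub>L ('a \<Rightarrow>\<^sub>L 'b)"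
    and K :: "'b set" and xbar d :: 'a
  assumes f1: "\<And>x. (f has_derivative blinfun_apply (f' x)) (at x)"
    and f2: "\<And>x. (f' has_derivative blinfun_apply (f'' x)) (at x)"
    and g1: "\<And>x. (g has_derivative blinfun_apply (g' x)) (at x)"
    and g2: "\<And>x. (g' has_derivative blinfun_apply (g'' x)) (at x)"
    and K_closed: "closed K"
    and d_tan: "d \<in> tangent_cone (g -` K) xbar"
    and opt: "local_opt_dir f (g -` K) xbar d"
    and crit: "f' xbar d = 0"
    and mscq: "MSCQ_dir g K xbar d"
  shows
    "\<exists>l \<in> M_multipliers (f' xbar) (g' xbar) K (g xbar) d.
        support_fun (blinfun_apply (g' xbar) ` asymptotic_second_order_tangent_cone (g -` K) xbar d) l \<le> 0
      \<and> l \<in> limiting_normal_cone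
             (asymptotic_second_order_tangent_cone K (g xbar) (g' xbar d)) 0"
proof -
  have xC: "g xbar \<in> K" using opt unfolding local_opt_dir_def by simp
  obtain \<rho> \<delta> \<kappa> where \<rho>: "\<rho> > 0" "\<delta> > 0" and \<kappa>: "\<kappa> > 0"
    and ms: "\<forall>u\<in>dir_nbhd \<rho> \<delta> d. infdist (xbar+u) (g -` K) \<le> \<kappa> * infdist (g (xbar+u)) K"
    using mscq unfolding MSCQ_dir_def by blast
  define W where "W = U 0 (g -` K) xbar d"
  define T where "T = U 0 K (g xbar) (g' xbar d)"
  define e :: 'b where "e = (0::real) *\<^sub>R g'' xbar d d"
  have e0: "e = 0" unfolding e_def by simp
  have WT: "\<forall>w\<in>W. g' xbar w + e \<in> T"
    unfolding W_def T_def e_def using chain_U[where g=g and g'=g' and g''=g'' and xbar=xbar, OF g1 g2[of xbar]] by blast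
  have reg: "\<forall>w z. z \<in> T \<longrightarrow> (\<exists>w'\<in>W. norm (w' - w) \<le> \<kappa> * norm (g' xbar w + e - z))"
    unfolding W_def T_def e_def using subreg_U[where g=g and g'=g' and g''=g'' and xbar=xbar, OF g1 g2[of xbar] K_closed xC \<rho> \<kappa> ms] by blast
  have optW: "\<forall>w\<in>W. f' xbar w \<ge> 0"
    unfolding W_def using opt_U[where f=f and f'=f' and f''=f'' and xbar=xbar, OF f1 f2[of xbar] opt crit, of _ 0] by simp
  have w0: "0 \<in> W" unfolding W_def by (rule zero_U0[OF d_tan])
  obtain wt where wtW: "wt \<in> W" and wmin: "\<forall>w\<in>W. f' xbar wt + 1 * (norm (wt - 0))\<^sup>2 \<le> f' xbar w + 1 * (norm (w - 0))\<^sup>2"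
    using core_min[OF _ w0, of 1 "f' xbar"] unfolding W_def by (auto intro: closed_U)
  have "f' xbar wt + (norm wt)\<^sup>2 \<le> 0" using wmin[rule_format, OF w0] by simp
  moreover have "f' xbar wt \<ge> 0" using optW wtW by blast
  ultimately have "(norm wt)\<^sup>2 \<le> 0" by linarith
  then have wt0: "wt = 0" by simp
  have approx: "\<forall>\<eta>>0. \<exists>z\<in>T. norm (z - 0) < \<eta> \<and> (\<exists>l\<in>regular_normal_cone T z.
      norm l \<le> 2 * (norm (f' xbar) + 2 * 1 * norm (wt - 0) + 8 * 1) * (\<kappa> + 1)
      \<and> (\<forall>u. \<bar>f' xbar u + l \<bullet> g' xbar u\<bar> \<le> (0 + \<eta>) * norm u))"
  proof (intro allI impI)
    fix \<eta> :: real assume \<eta>: "\<eta> > 0"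
    have "closed T" unfolding T_def by (rule closed_U)
    from core_pen[OF this wtW WT reg \<kappa> zero_less_one wmin \<eta>]
    show "\<exists>z\<in>T. norm (z - 0) < \<eta> \<and> (\<exists>l\<in>regular_normal_cone T z.
      norm l \<le> 2 * (norm (f' xbar) + 2 * 1 * norm (wt - 0) + 8 * 1) * (\<kappa> + 1)
      \<and> (\<forall>u. \<bar>f' xbar u + l \<bullet> g' xbar u\<bar> \<le> (0 + \<eta>) * norm u))"
      unfolding wt0 e0 by simp
  qed
  obtain l where lN: "l \<in> limiting_normal_cone T 0" and lg: "\<forall>u. \<bar>f' xbar u + l \<bullet> g' xbar u\<bar> \<le> 0 * norm u"
    using lnc_approx[OF approx] by blast
  have ldir: "l \<in> directional_normal_cone K (g xbar) (g' xbar d)"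
    using lnc_U_dnc[OF K_closed] lN unfolding T_def by blast
  have lstat: "\<forall>v. f' xbar v + l \<bullet> g' xbar v = 0" using lg by simp
  have sup: "support_fun (blinfun_apply (g' xbar) ` asymptotic_second_order_tangent_cone (g -` K) xbar d) l \<le> 0"
    unfolding support_fun_def U0_eq
  proof (rule SUP_least)
    fix u assume "u \<in> blinfun_apply (g' xbar) ` U 0 (g -` K) xbar d"
    then obtain w where w: "w \<in> W" "u = g' xbar w" unfolding W_def by blast
    have "l \<bullet> u = - f' xbar w" using lstat w(2) by (metis add_eq_0_iff)
    then show "ereal (l \<bullet> u) \<le> 0" using optW w(1) by simp
  qed
  show ?thesis
    unfolding M_multipliers_def
    using ldir lstat sup lN unfolding T_def U0_eq by blast
qed

lemma ereal_diff_ge0: "\<sigma> \<le> ereal x \<Longrightarrow> 0 \<le> ereal x - \<sigma>"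
  by (cases \<sigma>) auto

lemma partB:
  fixes f :: "'a::euclidean_space \<Rightarrow> real" and g :: "'a \<Rightarrow> 'b::euclidean_space"
    and f' :: "'a \<Rightarrow> 'a \<Rightarrow>\<^sub>L real" and f'' :: "'a \<Rightarrow> 'a \<Rightarrow>\<^sub>L ('a \<Rightarrow>\<^sub>L real)"
    and g' :: "'a \<Rightarrow> 'a \<Rightarrow>\<^sub>L 'b" and g'' :: "'a \<Rightarrow> 'a \<Rightarrow>\<^sub>L ('a \<Rightarrow>\<^sub>L 'b)"
    and K :: "'b set" and xbar d :: 'a
  assumes f1: "\<And>x. (f has_derivative blinfun_apply (f' x)) (at x)"
    and f2: "\<And>x. (f' has_derivative blinfun_apply (f'' x)) (at x)"
    and g1: "\<And>x. (g has_derivative blinfun_apply (g' x)) (at x)"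
    and g2: "\<And>x. (g' has_derivative blinfun_apply (g'' x)) (at x)"
    and K_closed: "closed K"
    and opt: "local_opt_dir f (g -` K) xbar d"
    and crit: "f' xbar d = 0"
    and mscq: "MSCQ_dir g K xbar d"
    and ne: "second_order_tangent_set K (g xbar) (g' xbar d) \<noteq> {}"
  shows
      "(\<exists>l \<in> M_multipliers (f' xbar) (g' xbar) K (g xbar) d.
        ereal (f'' xbar d d + l \<bullet> g'' xbar d d)
          - support_fun ((\<lambda>w. g' xbar w + g'' xbar d d) ` second_order_tangent_set (g -` K) xbar d) l \<ge> 0
      \<and> (\<exists>w :: nat \<Rightarrow> 'a. \<exists>ls :: nat \<Rightarrow> 'b.
           (\<forall>k. w k \<in> second_order_tangent_set (g -` K) xbar d)
         \<and> (\<forall>k. ls k \<in> limiting_normal_cone (second_order_tangent_set K (g xbar) (g' xbar d))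
                          (g' xbar (w k) + g'' xbar d d))
         \<and> (\<lambda>k. ereal (f' xbar (w k) + f'' xbar d d))
             \<longlonglongrightarrow> (INF v\<in>second_order_tangent_set (g -` K) xbar d. ereal (f' xbar v + f'' xbar d d))
         \<and> (\<lambda>k. ls k \<bullet> g' xbar (w k) + f' xbar (w k)) \<longlonglongrightarrow> 0
         \<and> ls \<longlonglongrightarrow> l))"
proof -
  have xC: "g xbar \<in> K" using opt unfolding local_opt_dir_def by simp
  obtain \<rho> \<delta> \<kappa> where \<rho>: "\<rho> > 0" "\<delta> > 0" and \<kappa>: "\<kappa> > 0"
    and ms: "\<forall>u\<in>dir_nbhd \<rho> \<delta> d. infdist (xbar+u) (g -` K) \<le> \<kappa> * infdist (g (xbar+u)) K"
    using mscq unfolding MSCQ_dir_def by blast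
  define W where "W = U 1 (g -` K) xbar d"
  define T where "T = U 1 K (g xbar) (g' xbar d)"
  define H where "H = g'' xbar d d"
  define h where "h = f'' xbar d d"
  define e :: 'b where "e = (1::real) *\<^sub>R H"
  have eH: "e = H" unfolding e_def by simp
  define A where "A = g' xbar"
  define a where "a = f' xbar"
  have WT: "\<forall>w\<in>W. A w + e \<in> T"
    unfolding W_def T_def e_def A_def H_def using chain_U[where g=g and g'=g' and g''=g'' and xbar=xbar, OF g1 g2[of xbar]] by blast
  have reg: "\<forall>w z. z \<in> T \<longrightarrow> (\<exists>w'\<in>W. norm (w' - w) \<le> \<kappa> * norm (A w + e - z))"
    unfolding W_def T_def e_def A_def H_def
    using subreg_U[where g=g and g'=g' and g''=g'' and xbar=xbar, OF g1 g2[of xbar] K_closed xC \<rho> \<kappa> ms] by blast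
  have optW: "\<forall>w\<in>W. a w + h \<ge> 0"
    unfolding W_def a_def h_def using opt_U[where f=f and f'=f' and f''=f'' and xbar=xbar, OF f1 f2[of xbar] opt crit, of _ 1] by simp
  have Wc: "closed W" unfolding W_def by (rule closed_U)
  have Tc: "closed T" unfolding T_def by (rule closed_U)
  obtain z0 where "z0 \<in> T" using ne unfolding T_def U1_eq by blast
  then obtain w1 where w1: "w1 \<in> W" using reg by blast
  define I where "I = (INF v\<in>W. ereal (a v + h))"
  have I0: "I \<ge> 0" unfolding I_def by (rule INF_greatest) (use optW in simp)
  have I1: "I \<le> ereal (a w1 + h)" unfolding I_def using w1 by (rule INF_lower)
  obtain \<alpha> where \<alpha>: "I = ereal \<alpha>" using I0 I1 by (cases I) auto
  have \<alpha>le: "\<alpha> \<le> a w + h" if "w \<in> W" for w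
    using INF_lower[OF that, of "\<lambda>v. ereal (a v + h)"] unfolding I_def[symmetric] \<alpha> by simp
  define Mb where "Mb = 2 * (norm a + 10) * (\<kappa> + 1)"
  have perk: "\<forall>k. \<exists>wt (l::'b) (dummy::nat). wt \<in> W \<and> l \<in> limiting_normal_cone T (A wt + e) \<and> norm l \<le> Mb
      \<and> (\<forall>u::'a. \<bar>a u + l \<bullet> A u\<bar> \<le> (2 * inverse (real (Suc k))) * norm u)
      \<and> a wt + h < \<alpha> + inverse (real (Suc k))
      \<and> \<bar>a wt + l \<bullet> A wt\<bar> \<le> 4 * inverse (real (Suc k))"
  proof
    fix k
    define iv where "iv = inverse (real (Suc k))"
    have iv: "iv > 0" "iv \<le> 1" unfolding iv_def by (auto simp: inverse_le_1_iff)
    have "I < ereal (\<alpha> + iv)" unfolding \<alpha> using iv by simp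
    then obtain w0 where w0: "w0 \<in> W" "a w0 + h < \<alpha> + iv"
      unfolding I_def INF_less_iff by auto
    define n where "n = norm w0"
    define \<epsilon> where "\<epsilon> = iv / (n + 1)\<^sup>2"
    have n0: "n \<ge> 0" unfolding n_def by simp
    have \<epsilon>: "\<epsilon> > 0" unfolding \<epsilon>_def using iv n0 by (simp add: add_nonneg_pos)
    have \<epsilon>n: "\<epsilon> * (n + 1)\<^sup>2 = iv" unfolding \<epsilon>_def using n0 by simp
    have \<epsilon>iv: "\<epsilon> \<le> iv"
    proof -
      have n1: "1 \<le> (n + 1)\<^sup>2" using one_le_power[of "n+1" 2] n0 by simp
      have "\<epsilon> * 1 \<le> \<epsilon> * (n + 1)\<^sup>2" using \<epsilon> n1 by (intro mult_left_mono) auto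
      then show ?thesis using \<epsilon>n by simp
    qed
    obtain wt where wtW: "wt \<in> W" and wmin: "\<forall>w\<in>W. a wt + \<epsilon> * (norm (wt - w0))\<^sup>2 \<le> a w + \<epsilon> * (norm (w - w0))\<^sup>2"
      using core_min[OF Wc w0(1) \<epsilon>] by blast
    define q where "q = norm (wt - w0)"
    have q0: "q \<ge> 0" unfolding q_def by simp
    have m1: "a wt + \<epsilon> * q\<^sup>2 \<le> a w0" using wmin[rule_format, OF w0(1)] unfolding q_def by simp
    have \<alpha>wt: "\<alpha> \<le> a wt + h" by (rule \<alpha>le[OF wtW])
    have eq2: "\<epsilon> * q\<^sup>2 < iv" using m1 \<alpha>wt w0(2) by linarith
    have eq2': "\<epsilon> * q\<^sup>2 \<ge> 0" using \<epsilon> by simp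
    have eq: "\<epsilon> * q \<le> iv"
    proof (rule power2_le_imp_le)
      have "(\<epsilon> * q)\<^sup>2 = \<epsilon> * (\<epsilon> * q\<^sup>2)" by (simp add: power2_eq_square)
      also have "\<dots> \<le> \<epsilon> * iv" using eq2 \<epsilon> by (intro mult_left_mono) auto
      also have "\<dots> \<le> iv * iv" using \<epsilon>iv iv by (intro mult_right_mono) auto
      finally show "(\<epsilon> * q)\<^sup>2 \<le> iv\<^sup>2" by (simp add: power2_eq_square)
    qed (use iv in simp)
    have eqn: "\<epsilon> * q * n \<le> iv"
    proof (rule power2_le_imp_le)
      have "n\<^sup>2 \<le> (n + 1)\<^sup>2" using n0 by (intro power_mono) auto
      then have "\<epsilon> * n\<^sup>2 \<le> \<epsilon> * (n + 1)\<^sup>2" using \<epsilon> by (intro mult_left_mono) auto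
      then have en: "\<epsilon> * n\<^sup>2 \<le> iv" using \<epsilon>n by simp
      have "(\<epsilon> * q * n)\<^sup>2 = (\<epsilon> * q\<^sup>2) * (\<epsilon> * n\<^sup>2)" by (simp add: power2_eq_square)
      also have "\<dots> \<le> iv * iv" using eq2 en eq2' \<epsilon> iv by (intro mult_mono) auto
      finally show "(\<epsilon> * q * n)\<^sup>2 \<le> iv\<^sup>2" by (simp add: power2_eq_square)
    qed (use iv in simp)
    have approx: "\<forall>\<eta>>0. \<exists>z\<in>T. norm (z - (A wt + e)) < \<eta> \<and> (\<exists>l\<in>regular_normal_cone T z.
        norm l \<le> 2 * (norm a + 2 * \<epsilon> * norm (wt - w0) + 8 * \<epsilon>) * (\<kappa> + 1)
        \<and> (\<forall>u. \<bar>a u + l \<bullet> A u\<bar> \<le> (2 * \<epsilon> * norm (wt - w0) + \<eta>) * norm u))"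
      using core_pen[OF Tc wtW WT reg \<kappa> \<epsilon> wmin] by blast
    obtain l where lN: "l \<in> limiting_normal_cone T (A wt + e)"
      and lM: "norm l \<le> 2 * (norm a + 2 * \<epsilon> * norm (wt - w0) + 8 * \<epsilon>) * (\<kappa> + 1)"
      and lg: "\<forall>u. \<bar>a u + l \<bullet> A u\<bar> \<le> (2 * \<epsilon> * norm (wt - w0)) * norm u"
      using lnc_approx[OF approx] by blast
    have "norm l \<le> Mb"
    proof -
      have "2 * \<epsilon> * norm (wt - w0) + 8 * \<epsilon> \<le> 10"
        using eq \<epsilon>iv iv unfolding q_def by linarith
      then have "2 * (norm a + 2 * \<epsilon> * norm (wt - w0) + 8 * \<epsilon>) * (\<kappa> + 1) \<le> 2 * (norm a + 10) * (\<kappa> + 1)"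
        using \<kappa> by (intro mult_right_mono) auto
      then show ?thesis using lM unfolding Mb_def by simp
    qed
    moreover have "\<forall>u::'a. \<bar>a u + l \<bullet> A u\<bar> \<le> (2 * iv) * norm u"
    proof
      fix u :: 'a
      have "(2 * \<epsilon> * norm (wt - w0)) * norm u \<le> (2 * iv) * norm u"
        using eq unfolding q_def by (intro mult_right_mono) auto
      then show "\<bar>a u + l \<bullet> A u\<bar> \<le> (2 * iv) * norm u" using lg by (meson order_trans)
    qed
    moreover have "a wt + h < \<alpha> + iv" using m1 w0(2) eq2' by linarith
    moreover have "\<bar>a wt + l \<bullet> A wt\<bar> \<le> 4 * iv"
    proof -
      have "\<bar>a wt + l \<bullet> A wt\<bar> \<le> (2 * \<epsilon> * q) * norm wt" using lg unfolding q_def by blast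
      also have "\<dots> \<le> (2 * \<epsilon> * q) * (n + q)"
      proof (rule mult_left_mono)
        show "norm wt \<le> n + q" unfolding n_def q_def using norm_triangle_ineq[of w0 "wt - w0"] by simp
      qed (use \<epsilon> q0 in simp)
      also have "\<dots> = 2 * (\<epsilon> * q * n) + 2 * (\<epsilon> * q\<^sup>2)" by (simp add: power2_eq_square algebra_simps)
      also have "\<dots> \<le> 4 * iv" using eqn eq2 by linarith
      finally show ?thesis .
    qed
    ultimately show "\<exists>wt (l::'b) (dummy::nat). wt \<in> W \<and> l \<in> limiting_normal_cone T (A wt + e) \<and> norm l \<le> Mb
      \<and> (\<forall>u::'a. \<bar>a u + l \<bullet> A u\<bar> \<le> (2 * inverse (real (Suc k))) * norm u)
      \<and> a wt + h < \<alpha> + inverse (real (Suc k))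
      \<and> \<bar>a wt + l \<bullet> A wt\<bar> \<le> 4 * inverse (real (Suc k))"
      using wtW lN unfolding iv_def by blast
  qed
  obtain WW LL DD where P: "\<forall>k. WW k \<in> W \<and> LL k \<in> limiting_normal_cone T (A (WW k) + e) \<and> norm (LL k) \<le> Mb
      \<and> (\<forall>u. \<bar>a u + LL k \<bullet> A u\<bar> \<le> (2 * inverse (real (Suc k))) * norm u)
      \<and> a (WW k) + h < \<alpha> + inverse (real (Suc k))
      \<and> \<bar>a (WW k) + LL k \<bullet> A (WW k)\<bar> \<le> 4 * inverse (real (Suc k))"
    using choice3[OF perk] by blast
  have "bounded (range LL)" unfolding bounded_iff using P by blast
  then obtain lam \<phi> where \<phi>: "strict_mono \<phi>" "(LL \<circ> \<phi>) \<longlonglongrightarrow> lam"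
    using bounded_imp_convergent_subsequence by blast
  have inv\<phi>: "(\<lambda>n. inverse (real (Suc (\<phi> n)))) \<longlonglongrightarrow> 0"
    using LIMSEQ_subseq_LIMSEQ[OF LIMSEQ_inverse_real_of_nat \<phi>(1)] by (simp add: comp_def)
  have Llim: "(\<lambda>k. LL (\<phi> k)) \<longlonglongrightarrow> lam" using \<phi>(2) by (simp add: comp_def)
  have lamdir: "lam \<in> directional_normal_cone K (g xbar) (g' xbar d)"
  proof (rule dnc_closed[OF _ Llim], intro allI)
    fix k show "LL (\<phi> k) \<in> directional_normal_cone K (g xbar) (g' xbar d)"
      using lnc_U_dnc[OF K_closed] P unfolding T_def by blast
  qed
  have lamstat: "\<forall>u. a u + lam \<bullet> A u = 0"
  proof
    fix u
    have "\<bar>a u + lam \<bullet> A u\<bar> \<le> (2 * 0) * norm u"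
    proof (rule LIMSEQ_le)
      show "(\<lambda>k. \<bar>a u + LL (\<phi> k) \<bullet> A u\<bar>) \<longlonglongrightarrow> \<bar>a u + lam \<bullet> A u\<bar>" by (intro tendsto_intros Llim)
      show "(\<lambda>k. (2 * inverse (real (Suc (\<phi> k)))) * norm u) \<longlonglongrightarrow> (2 * 0) * norm u"
        by (intro tendsto_intros inv\<phi>)
      show "\<exists>N. \<forall>k\<ge>N. \<bar>a u + LL (\<phi> k) \<bullet> A u\<bar> \<le> (2 * inverse (real (Suc (\<phi> k)))) * norm u"
        using P by blast
    qed
    then show "a u + lam \<bullet> A u = 0" by simp
  qed
  have lamM: "lam \<in> M_multipliers (f' xbar) (g' xbar) K (g xbar) d"
    unfolding M_multipliers_def using lamdir lamstat unfolding a_def A_def by blast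
  have supb: "support_fun ((\<lambda>w. g' xbar w + g'' xbar d d) ` second_order_tangent_set (g -` K) xbar d) lam
      \<le> ereal (f'' xbar d d + lam \<bullet> g'' xbar d d)"
    unfolding support_fun_def U1_eq
  proof (rule SUP_least)
    fix u assume "u \<in> (\<lambda>w. g' xbar w + g'' xbar d d) ` U 1 (g -` K) xbar d"
    then obtain w where w: "w \<in> W" "u = A w + H" unfolding W_def A_def H_def by blast
    have "lam \<bullet> u = - a w + lam \<bullet> H" using lamstat w(2) by (simp add: inner_add_right) (metis add_eq_0_iff)
    moreover have "0 \<le> a w + h" using optW w(1) by blast
    ultimately have "lam \<bullet> u \<le> h + lam \<bullet> H" by linarith
    then show "ereal (lam \<bullet> u) \<le> ereal (f'' xbar d d + lam \<bullet> g'' xbar d d)"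
      unfolding h_def H_def by simp
  qed
  have c1: "\<forall>k. WW (\<phi> k) \<in> second_order_tangent_set (g -` K) xbar d"
    using P unfolding W_def U1_eq by blast
  have c2: "\<forall>k. LL (\<phi> k) \<in> limiting_normal_cone (second_order_tangent_set K (g xbar) (g' xbar d))
                          (g' xbar (WW (\<phi> k)) + g'' xbar d d)"
    using P unfolding T_def U1_eq eH H_def A_def by blast
  have c3: "(\<lambda>k. ereal (f' xbar (WW (\<phi> k)) + f'' xbar d d))
             \<longlonglongrightarrow> (INF v\<in>second_order_tangent_set (g -` K) xbar d. ereal (f' xbar v + f'' xbar d d))"
  proof -
    have "(\<lambda>k. a (WW (\<phi> k)) + h) \<longlonglongrightarrow> \<alpha>"
    proof (rule LIM_zero_cancel, rule Lim_null_comparison[OF _ inv\<phi>], intro always_eventually allI)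
      fix k
      have "\<alpha> \<le> a (WW (\<phi> k)) + h" using \<alpha>le P by blast
      moreover have "a (WW (\<phi> k)) + h < \<alpha> + inverse (real (Suc (\<phi> k)))" using P by blast
      ultimately show "norm (a (WW (\<phi> k)) + h - \<alpha>) \<le> inverse (real (Suc (\<phi> k)))" by simp
    qed
    then have "(\<lambda>k. ereal (a (WW (\<phi> k)) + h)) \<longlonglongrightarrow> ereal \<alpha>" by (rule tendsto_ereal)
    then show ?thesis unfolding \<alpha>[symmetric] I_def W_def U1_eq a_def h_def .
  qed
  have c4: "(\<lambda>k. LL (\<phi> k) \<bullet> g' xbar (WW (\<phi> k)) + f' xbar (WW (\<phi> k))) \<longlonglongrightarrow> 0"
  proof (rule Lim_null_comparison[where g="\<lambda>k. 4 * inverse (real (Suc (\<phi> k)))"])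
    show "\<forall>\<^sub>F k in sequentially. norm (LL (\<phi> k) \<bullet> g' xbar (WW (\<phi> k)) + f' xbar (WW (\<phi> k))) \<le> 4 * inverse (real (Suc (\<phi> k)))"
    proof (intro always_eventually allI)
      fix k show "norm (LL (\<phi> k) \<bullet> g' xbar (WW (\<phi> k)) + f' xbar (WW (\<phi> k))) \<le> 4 * inverse (real (Suc (\<phi> k)))"
        using P unfolding a_def A_def by (simp add: add.commute)
    qed
    show "(\<lambda>k. 4 * inverse (real (Suc (\<phi> k)))) \<longlonglongrightarrow> 0" using tendsto_mult[OF tendsto_const inv\<phi>, of 4] by simp
  qed
  show ?thesis
  proof (intro bexI[OF _ lamM] conjI exI)
    show "ereal (f'' xbar d d + lam \<bullet> g'' xbar d d)
          - support_fun ((\<lambda>w. g' xbar w + g'' xbar d d) ` second_order_tangent_set (g -` K) xbar d) lam \<ge> 0"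
      by (rule ereal_diff_ge0[OF supb])
  qed (use c1 c2 c3 c4 Llim in auto)
qed

theorem theorem4p4:
  fixes f :: "'a::euclidean_space \<Rightarrow> real" and g :: "'a \<Rightarrow> 'b::euclidean_space"
    and f' :: "'a \<Rightarrow> 'a \<Rightarrow>\<^sub>L real" and f'' :: "'a \<Rightarrow> 'a \<Rightarrow>\<^sub>L ('a \<Rightarrow>\<^sub>L real)"
    and g' :: "'a \<Rightarrow> 'a \<Rightarrow>\<^sub>L 'b" and g'' :: "'a \<Rightarrow> 'a \<Rightarrow>\<^sub>L ('a \<Rightarrow>\<^sub>L 'b)"
    and K :: "'b set" and xbar d :: 'a
  assumes f1: "\<And>x. (f has_derivative blinfun_apply (f' x)) (at x)"
    and f2: "\<And>x. (f' has_derivative blinfun_apply (f'' x)) (at x)"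
    and f2c: "continuous_on UNIV f''"
    and g1: "\<And>x. (g has_derivative blinfun_apply (g' x)) (at x)"
    and g2: "\<And>x. (g' has_derivative blinfun_apply (g'' x)) (at x)"
    and g2c: "continuous_on UNIV g''"
    and K_closed: "closed K"
    and d_tan: "d \<in> tangent_cone (g -` K) xbar"
    and opt: "local_opt_dir f (g -` K) xbar d"
    and crit: "f' xbar d = 0"
    and mscq: "MSCQ_dir g K xbar d"
  shows
    "(\<exists>l \<in> M_multipliers (f' xbar) (g' xbar) K (g xbar) d.
        support_fun (blinfun_apply (g' xbar) ` asymptotic_second_order_tangent_cone (g -` K) xbar d) l \<le> 0
      \<and> l \<in> limiting_normal_cone
             (asymptotic_second_order_tangent_cone K (g xbar) (g' xbar d)) 0)
   \<and> (second_order_tangent_set K (g xbar) (g' xbar d) \<noteq> {} \<longrightarrow>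
      (\<exists>l \<in> M_multipliers (f' xbar) (g' xbar) K (g xbar) d.
        ereal (f'' xbar d d + l \<bullet> g'' xbar d d)
          - support_fun ((\<lambda>w. g' xbar w + g'' xbar d d) ` second_order_tangent_set (g -` K) xbar d) l \<ge> 0
      \<and> (\<exists>w :: nat \<Rightarrow> 'a. \<exists>ls :: nat \<Rightarrow> 'b.
           (\<forall>k. w k \<in> second_order_tangent_set (g -` K) xbar d)
         \<and> (\<forall>k. ls k \<in> limiting_normal_cone (second_order_tangent_set K (g xbar) (g' xbar d))
                          (g' xbar (w k) + g'' xbar d d))
         \<and> (\<lambda>k. ereal (f' xbar (w k) + f'' xbar d d))
             \<longlonglongrightarrow> (INF v\<in>second_order_tangent_set (g -` K) xbar d. ereal (f' xbar v + f'' xbar d d))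
         \<and> (\<lambda>k. ls k \<bullet> g' xbar (w k) + f' xbar (w k)) \<longlonglongrightarrow> 0
         \<and> ls \<longlonglongrightarrow> l)))"
proof (intro conjI impI)
  show "\<exists>l \<in> M_multipliers (f' xbar) (g' xbar) K (g xbar) d.
        support_fun (blinfun_apply (g' xbar) ` asymptotic_second_order_tangent_cone (g -` K) xbar d) l \<le> 0
      \<and> l \<in> limiting_normal_cone
             (asymptotic_second_order_tangent_cone K (g xbar) (g' xbar d)) 0"
    by (rule partA[OF f1 f2 g1 g2 K_closed d_tan opt crit mscq])
next
  assume ne: "second_order_tangent_set K (g xbar) (g' xbar d) \<noteq> {}"
  show "\<exists>l \<in> M_multipliers (f' xbar) (g' xbar) K (g xbar) d.
        ereal (f'' xbar d d + l \<bullet> g'' xbar d d)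
          - support_fun ((\<lambda>w. g' xbar w + g'' xbar d d) ` second_order_tangent_set (g -` K) xbar d) l \<ge> 0
      \<and> (\<exists>w :: nat \<Rightarrow> 'a. \<exists>ls :: nat \<Rightarrow> 'b.
           (\<forall>k. w k \<in> second_order_tangent_set (g -` K) xbar d)
         \<and> (\<forall>k. ls k \<in> limiting_normal_cone (second_order_tangent_set K (g xbar) (g' xbar d))
                          (g' xbar (w k) + g'' xbar d d))
         \<and> (\<lambda>k. ereal (f' xbar (w k) + f'' xbar d d))
             \<longlonglongrightarrow> (INF v\<in>second_order_tangent_set (g -` K) xbar d. ereal (f' xbar v + f'' xbar d d))
         \<and> (\<lambda>k. ls k \<bullet> g' xbar (w k) + f' xbar (w k)) \<longlonglongrightarrow> 0
         \<and> ls \<longlonglongrightarrow> l)"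
    by (rule partB[OF f1 f2 g1 g2 K_closed opt crit mscq ne])
qed

end
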